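(* Let $d$ be an odd prime. For each vector $\vec c=(c_0,c_1,\dots,c_{d-1})$ of complex numbers of modulus one with $c_0=1$, let $U(\vec c)$ be the one-qudit unitary $U(\vec c)=F\,\mathrm{diag}(c_0,\dots,c_{d-1})$, i.e. $U(\vec c)|j\rangle=c_j\frac{1}{\sqrt d}\sum_{m\in\mathbb{Z}_d}\omega^{jm}|m\rangle$. Then every unitary $V\in U(d)$ can be written as a finite product of gates of the form $U(\vec c)$.
   Context: $\omega=e^{2\pi i/d}$; qudits have computational basis $\{|j\rangle : j\in\mathbb{Z}_d\}$; $F|j\rangle=\frac1{\sqrt d}\sum_{m\in\mathbb{Z}_d}\omega^{jm}|m\rangle$ is the quantum Fourier transform on one qudit. *)

theory Defs
  imports "Jordan_Normal_Form.Schur_Decomposition"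
begin

definition omega :: "nat \<Rightarrow> complex" where
  "omega d = cis (2 * pi / real d)"

definition gateU :: "nat \<Rightarrow> (nat \<Rightarrow> complex) \<Rightarrow> complex mat" where
  "gateU d c = mat d d (\<lambda>(m, j). c j * omega d ^ (j * m) / complex_of_real (sqrt (real d)))"

definition admissible :: "nat \<Rightarrow> (nat \<Rightarrow> complex) \<Rightarrow> bool" where
  "admissible d c \<longleftrightarrow> c 0 = 1 \<and> (\<forall>j<d. cmod (c j) = 1)"

definition unitary_mat :: "nat \<Rightarrow> complex mat \<Rightarrow> bool" where
  "unitary_mat d V \<longleftrightarrow> V \<in> carrier_mat d d \<and> V * mat_adjoint V = 1\<^sub>m d"

end

theory Submission
  imports Defs
begin
lemma cis_root_sum:
  assumes d: "d > 0"
  shows "(\<Sum>k<d. cis (2*pi*real_of_int a / real d) ^ k) = (if int d dvd a then of_nat d else 0)"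
proof (cases "int d dvd a")
  case True
  then obtain q where q: "a = int d * q" by (auto elim: dvdE)
  have "cis (2*pi*real_of_int a / real d) = cis (2*pi*real_of_int q)"
    using d by (simp add: q field_simps)
  also have "\<dots> = 1" by simp
  finally show ?thesis using True by simp
next
  case False
  let ?z = "cis (2*pi*real_of_int a / real d)"
  have z1: "?z \<noteq> 1"
  proof
    assume "?z = 1"
    hence "cos (2*pi*real_of_int a / real d) = 1" by (simp add: complex_eq_iff)
    then obtain n :: int where n: "2*pi*real_of_int a / real d = real_of_int n * 2 * pi"
      by (subst (asm) cos_one_2pi_int) blast
    hence "real_of_int a = real_of_int (n * int d)" using d by (simp add: field_simps)
    hence "a = n * int d" by (simp only: of_int_eq_iff)
    thus False using False by simp
  qed
  have zd: "?z ^ d = 1"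
  proof -
    have "?z ^ d = cis (real d * (2*pi*real_of_int a / real d))" by (simp add: DeMoivre)
    also have "\<dots> = cis (2*pi*real_of_int a)" using d by simp
    also have "\<dots> = 1" by simp
    finally show ?thesis .
  qed
  show ?thesis using geometric_sum[OF z1, of d] zd False by simp
qed

lemma omega_pow: "omega d ^ n = cis (2*pi*real n / real d)"
  by (simp add: omega_def DeMoivre field_simps)

lemma omega_sum:
  assumes d: "d > 0" and m: "m < d" and n: "n < d"
  shows "(\<Sum>k<d. omega d ^ (k*m) * cnj (omega d ^ (k*n))) = (if m = n then of_nat d else 0)"
proof -
  have "\<And>k. omega d ^ (k*m) * cnj (omega d ^ (k*n)) = cis (2*pi*real_of_int (int m - int n) / real d) ^ k"
  proof -
    fix k
    have "omega d ^ (k*m) * cnj (omega d ^ (k*n)) = cis (2*pi*real (k*m) / real d) * cis (- (2*pi*real (k*n) / real d))"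
      by (simp add: omega_pow cis_cnj)
    also have "\<dots> = cis (real k * (2*pi*real_of_int (int m - int n) / real d))"
      by (simp add: cis_mult algebra_simps diff_divide_distrib)
    also have "\<dots> = cis (2*pi*real_of_int (int m - int n) / real d) ^ k" by (simp add: DeMoivre)
    finally show "omega d ^ (k*m) * cnj (omega d ^ (k*n)) = cis (2*pi*real_of_int (int m - int n) / real d) ^ k" .
  qed
  hence "(\<Sum>k<d. omega d ^ (k*m) * cnj (omega d ^ (k*n))) = (\<Sum>k<d. cis (2*pi*real_of_int (int m - int n) / real d) ^ k)"
    by simp
  also have "\<dots> = (if int d dvd (int m - int n) then of_nat d else 0)" by (rule cis_root_sum[OF d])
  also have "(int d dvd (int m - int n)) = (m = n)"
  proof
    assume "int d dvd (int m - int n)"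
    then obtain q where q: "int m - int n = int d * q" by (auto elim: dvdE)
    have "\<bar>int m - int n\<bar> < int d" using m n by linarith
    hence "\<bar>q\<bar> * int d < int d" using q by (simp add: abs_mult mult.commute)
    hence lt: "\<bar>q\<bar> * int d < 1 * int d" by simp
    have "\<bar>q\<bar> < 1"
    proof (rule ccontr)
      assume "\<not> \<bar>q\<bar> < 1"
      hence "1 \<le> \<bar>q\<bar>" by simp
      hence "1 * int d \<le> \<bar>q\<bar> * int d" by (rule mult_right_mono) simp
      thus False using lt by simp
    qed
    hence "q = 0" by simp
    thus "m = n" using q by simp
  qed simp
  finally show ?thesis .
qed

definition dl :: "nat \<Rightarrow> nat \<Rightarrow> complex" where "dl m n = (if m = n then 1 else 0)"
definition diagm :: "nat \<Rightarrow> (nat \<Rightarrow> complex) \<Rightarrow> complex mat" where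
  "diagm d c = mat d d (\<lambda>(m,n). dl m n * c m)"
definition ip :: "nat \<Rightarrow> (nat \<Rightarrow> complex) \<Rightarrow> (nat \<Rightarrow> complex) \<Rightarrow> complex" where
  "ip d v x = (\<Sum>k<d. cnj (v k) * x k)"
definition Rm :: "nat \<Rightarrow> (nat \<Rightarrow> complex) \<Rightarrow> complex \<Rightarrow> complex mat" where
  "Rm d v a = mat d d (\<lambda>(m,n). dl m n + (a - 1) * v m * cnj (v n))"
definition Rv :: "nat \<Rightarrow> (nat \<Rightarrow> complex) \<Rightarrow> complex \<Rightarrow> (nat \<Rightarrow> complex) \<Rightarrow> (nat \<Rightarrow> complex)" where
  "Rv d v a x = (\<lambda>m. x m + (a - 1) * ip d v x * v m)"
definition unitv :: "nat \<Rightarrow> (nat \<Rightarrow> complex) \<Rightarrow> bool" where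
  "unitv d v \<longleftrightarrow> ip d v v = 1"
definition inG :: "nat \<Rightarrow> complex mat \<Rightarrow> bool" where
  "inG d M \<longleftrightarrow> (\<exists>cs. (\<forall>c\<in>set cs. admissible d c) \<and> M = foldr (\<lambda>c M. gateU d c * M) cs (1\<^sub>m d))"
definition good :: "nat \<Rightarrow> (nat \<Rightarrow> complex) \<Rightarrow> bool" where
  "good d v \<longleftrightarrow> (\<forall>a. cmod a = 1 \<longrightarrow> inG d (Rm d v a))"

lemma mat_mult_mat: "mat d d f * mat d d g = mat d d (\<lambda>(i,j). \<Sum>k<d. f (i,k) * g (k,j))"
  by (rule eq_matI) (auto simp: scalar_prod_def row_def col_def lessThan_atLeast0 intro!: sum.cong)

lemma sum_dl_left: assumes "m < d" shows "(\<Sum>k<d. dl m k * f k) = f m"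
proof -
  have "(\<Sum>k<d. dl m k * f k) = (\<Sum>k<d. if m = k then f k else 0)"
    by (rule sum.cong) (auto simp: dl_def)
  thus ?thesis using assms by simp
qed
lemma sum_dl_right: assumes "n < d" shows "(\<Sum>k<d. f k * dl k n) = f n"
proof -
  have "(\<Sum>k<d. f k * dl k n) = (\<Sum>k<d. if k = n then f k else 0)"
    by (rule sum.cong) (auto simp: dl_def)
  thus ?thesis using assms by simp
qed

lemma mat_eqI': "(\<And>i j. i < d \<Longrightarrow> j < d \<Longrightarrow> f (i,j) = g (i,j)) \<Longrightarrow> mat d d f = mat d d g"
  by (rule eq_matI) auto

lemma rank1_prod:
  assumes "m < d" "n < d"
  shows "(\<Sum>k<d. (dl m k + x m * y k) * (dl k n + z k * w n))
     = dl m n + z m * w n + x m * y n + x m * w n * (\<Sum>k<d. y k * z k)"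
proof -
  have "(\<Sum>k<d. (dl m k + x m * y k) * (dl k n + z k * w n))
     = (\<Sum>k<d. dl m k * dl k n) + (\<Sum>k<d. dl m k * (z k * w n)) + x m * (\<Sum>k<d. y k * dl k n)
       + x m * w n * (\<Sum>k<d. y k * z k)"
    by (simp add: ring_distribs sum.distrib sum_distrib_left mult_ac)
  also have "(\<Sum>k<d. dl m k * dl k n) = dl m n" using assms by (simp add: sum_dl_left)
  also have "(\<Sum>k<d. dl m k * (z k * w n)) = z m * w n" using assms by (simp add: sum_dl_left)
  also have "(\<Sum>k<d. y k * dl k n) = y n" using assms by (simp add: sum_dl_right)
  finally show ?thesis by simp
qed

lemma ip_self: "ip d v v = (\<Sum>k<d. cnj (v k) * v k)" by (simp add: ip_def)

lemma Rm_mult: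
  assumes "unitv d v"
  shows "Rm d v a * Rm d v b = Rm d v (a*b)"
proof -
  have u: "(\<Sum>k<d. cnj (v k) * v k) = 1" using assms by (simp add: unitv_def ip_def)
  show ?thesis unfolding Rm_def mat_mult_mat
  proof (rule mat_eqI', clarify)
    fix m n assume True: "m < d" "n < d"
    show "(\<Sum>k<d. (dl m k + (a - 1) * v m * cnj (v k)) * (dl k n + (b - 1) * v k * cnj (v n))) =
          dl m n + (a * b - 1) * v m * cnj (v n)"
    proof -
      have sb: "(\<Sum>k<d. cnj (v k) * ((b - 1) * v k)) = b - 1"
      proof -
        have "(\<Sum>k<d. cnj (v k) * ((b - 1) * v k)) = (b - 1) * (\<Sum>k<d. cnj (v k) * v k)"
          by (simp add: sum_distrib_left mult_ac)
        thus ?thesis using u by simp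
      qed
      have "(\<Sum>k<d. (dl m k + (a - 1) * v m * cnj (v k)) * (dl k n + (b - 1) * v k * cnj (v n)))
         = dl m n + (b - 1) * v m * cnj (v n) + (a - 1) * v m * cnj (v n)
           + (a - 1) * v m * cnj (v n) * (\<Sum>k<d. cnj (v k) * ((b - 1) * v k))"
        using True by (subst rank1_prod) auto
      also have "\<dots> = dl m n + (a * b - 1) * v m * cnj (v n)" unfolding sb by (simp add: algebra_simps)
      finally show ?thesis .
    qed
  qed
qed

lemma Rm_cong: "(\<And>m. m < d \<Longrightarrow> v m = v' m) \<Longrightarrow> Rm d v a = Rm d v' a"
  unfolding Rm_def by (rule mat_eqI') auto

lemma Rm_one: "Rm d v 1 = 1\<^sub>m d"
  unfolding Rm_def by (rule eq_matI) (auto simp: dl_def)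

lemma Rm_carrier: "Rm d v a \<in> carrier_mat d d" unfolding Rm_def by simp

lemma norm1_cnj: "cmod a = 1 \<Longrightarrow> a * cnj a = 1"
  by (metis complex_norm_square mult.commute of_real_1 power_one)

lemma cnj_norm1: "a * cnj a = 1 \<Longrightarrow> cmod a = 1"
proof -
  assume "a * cnj a = 1"
  hence "complex_of_real ((cmod a)^2) = 1" by (metis complex_norm_square)
  hence "(cmod a)^2 = 1" by (metis of_real_eq_1_iff)
  thus "cmod a = 1" by (simp add: power2_eq_1_iff) (metis norm_ge_zero abs_of_nonneg abs_neg_one)
qed

lemma sum_lin_aux: "(\<Sum>l<d. (f l + K * g l) * h l) = (\<Sum>l<d. f l * h l) + K * (\<Sum>l<d. g l * (h l::complex))"
  by (simp add: ring_distribs sum.distrib sum_distrib_left mult_ac)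

lemma conj_gen:
  assumes U: "\<And>m n. m < d \<Longrightarrow> n < d \<Longrightarrow> (\<Sum>k<d. u (m,k) * cnj (u (n,k))) = dl m n"
  shows "mat d d u * Rm d x b * mat d d (\<lambda>(k,n). cnj (u (n,k))) = Rm d (\<lambda>m. \<Sum>k<d. u (m,k) * x k) b"
  unfolding Rm_def mat_mult_mat
proof (rule mat_eqI', goal_cases)
  case (1 m n)
  hence m: "m < d" and n: "n < d" by auto
  let ?X = "\<lambda>m. \<Sum>k<d. u (m,k) * x k"
  have inner: "\<And>l. l < d \<Longrightarrow> (\<Sum>k<d. u (m,k) * (dl k l + (b - 1) * x k * cnj (x l)))
      = u (m,l) + (b - 1) * ?X m * cnj (x l)"
  proof -
    fix l assume l: "l < d"
    have "(\<Sum>k<d. u (m,k) * (dl k l + (b - 1) * x k * cnj (x l)))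
       = (\<Sum>k<d. u (m,k) * dl k l) + (b - 1) * cnj (x l) * (\<Sum>k<d. u (m,k) * x k)"
      by (simp add: ring_distribs sum.distrib sum_distrib_left mult_ac)
    also have "(\<Sum>k<d. u (m,k) * dl k l) = u (m,l)" using l by (rule sum_dl_right)
    finally show "(\<Sum>k<d. u (m,k) * (dl k l + (b - 1) * x k * cnj (x l)))
      = u (m,l) + (b - 1) * ?X m * cnj (x l)" by (simp add: mult_ac)
  qed
  have "(\<Sum>l<d. (case (m, l) of (i, j) \<Rightarrow> \<Sum>k<d. (case (i, k) of (i, j) \<Rightarrow> u (i, j)) * (case (k, j) of (m, n) \<Rightarrow> dl m n + (b - 1) * x m * cnj (x n))) *
               (case (l, n) of (k, n) \<Rightarrow> cnj (u (n, k))))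
      = (\<Sum>l<d. (u (m,l) + (b - 1) * ?X m * cnj (x l)) * cnj (u (n,l)))"
    by (rule sum.cong) (simp_all add: inner)
  also have "\<dots> = (\<Sum>l<d. u (m,l) * cnj (u (n,l))) + ((b - 1) * ?X m) * (\<Sum>l<d. cnj (x l) * cnj (u (n,l)))"
    by (rule sum_lin_aux)
  also have "\<dots> = dl m n + (b - 1) * ?X m * cnj (?X n)"
  proof -
    have "(\<Sum>l<d. cnj (x l) * cnj (u (n,l))) = cnj (\<Sum>l<d. u (n,l) * x l)"
      by (simp add: mult.commute)
    thus ?thesis using U[OF m n] by simp
  qed
  finally show ?case
    by simp
qed

lemma Rm_apply: assumes "m < d"
  shows "(\<Sum>k<d. (dl m k + (a - 1) * w m * cnj (w k)) * x k) = Rv d w a x m"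
proof -
  have e: "(\<Sum>k<d. (dl m k + (a - 1) * w m * cnj (w k)) * x k)
      = (\<Sum>k<d. dl m k * x k) + ((a - 1) * w m) * (\<Sum>k<d. cnj (w k) * x k)"
    by (rule sum_lin_aux)
  have h: "(\<Sum>k<d. dl m k * x k) = x m" by (rule sum_dl_left[OF assms])
  have rv: "Rv d w a x m = x m + ((a - 1) * w m) * (\<Sum>k<d. cnj (w k) * x k)"
    by (simp add: Rv_def ip_def mult_ac)
  show ?thesis by (simp only: e h rv)
qed

lemma dl_sym: "dl m n = dl n m" by (simp add: dl_def)
lemma cnj_dl[simp]: "cnj (dl m n) = dl m n" by (simp add: dl_def)

lemma Rm_conj:
  assumes w: "unitv d w" and a: "cmod a = 1"
  shows "Rm d w a * Rm d x b * Rm d w (cnj a) = Rm d (Rv d w a x) b"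
proof -
  define u where "u = (\<lambda>(m,k). dl m k + (a - 1) * w m * cnj (w k))"
  have e1: "Rm d w a = mat d d u" by (simp add: Rm_def u_def)
  have e2: "Rm d w (cnj a) = mat d d (\<lambda>(k,n). cnj (u (n,k)))"
    unfolding Rm_def u_def by (rule mat_eqI') (simp add: dl_sym mult_ac)
  have aa: "a * cnj a = 1" using a by (rule norm1_cnj)
  have U: "(\<Sum>k<d. u (m,k) * cnj (u (n,k))) = dl m n" if m: "m < d" and n: "n < d" for m n
  proof -
    have "Rm d w a * Rm d w (cnj a) = 1\<^sub>m d" using Rm_mult[OF w] aa Rm_one by simp
    hence "(Rm d w a * Rm d w (cnj a)) $$ (m,n) = 1\<^sub>m d $$ (m,n)" by simp
    hence "(mat d d u * mat d d (\<lambda>(k,n). cnj (u (n,k)))) $$ (m,n) = dl m n"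
      using m n unfolding e1 e2 by (simp add: dl_def)
    thus ?thesis using m n unfolding mat_mult_mat by simp
  qed
  have "Rm d w a * Rm d x b * Rm d w (cnj a) = Rm d (\<lambda>m. \<Sum>k<d. u (m,k) * x k) b"
    unfolding e1 e2 by (rule conj_gen) (rule U)
  also have "\<dots> = Rm d (Rv d w a x) b"
    by (rule Rm_cong) (simp add: u_def Rm_apply)
  finally show ?thesis .
qed

lemma diag_conj:
  assumes c: "\<And>m. m < d \<Longrightarrow> cmod (c m) = 1"
  shows "diagm d c * Rm d x b * diagm d (\<lambda>m. cnj (c m)) = Rm d (\<lambda>m. c m * x m) b"
proof -
  define u where "u = (\<lambda>(m,k). dl m k * c m)"
  have e1: "diagm d c = mat d d u" by (simp add: diagm_def u_def)
  have e2: "diagm d (\<lambda>m. cnj (c m)) = mat d d (\<lambda>(k,n). cnj (u (n,k)))"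
    unfolding diagm_def u_def by (rule mat_eqI') (auto simp: dl_def)
  have U: "(\<Sum>k<d. u (m,k) * cnj (u (n,k))) = dl m n" if m: "m < d" and n: "n < d" for m n
  proof -
    have "(\<Sum>k<d. u (m,k) * cnj (u (n,k))) = (\<Sum>k<d. dl m k * (c m * cnj (u (n,k))))"
      by (rule sum.cong) (auto simp: u_def mult_ac)
    also have "\<dots> = c m * cnj (u (n,m))" using m by (rule sum_dl_left)
    also have "\<dots> = dl m n" using norm1_cnj[OF c[OF m]] by (auto simp: u_def dl_def)
    finally show ?thesis .
  qed
  have "diagm d c * Rm d x b * diagm d (\<lambda>m. cnj (c m)) = Rm d (\<lambda>m. \<Sum>k<d. u (m,k) * x k) b"
    unfolding e1 e2 by (rule conj_gen) (rule U)
  also have "\<dots> = Rm d (\<lambda>m. c m * x m) b"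
  proof (rule Rm_cong)
    fix m assume m: "m < d"
    have "(\<Sum>k<d. u (m,k) * x k) = (\<Sum>k<d. dl m k * (c m * x k))"
      by (rule sum.cong) (auto simp: u_def mult_ac)
    also have "\<dots> = c m * x m" using m by (rule sum_dl_left)
    finally show "(\<Sum>k<d. u (m,k) * x k) = c m * x m" .
  qed
  finally show ?thesis .
qed

lemma gate_carrier: "gateU d c \<in> carrier_mat d d" by (simp add: gateU_def)

lemma foldr_carrier: "foldr (\<lambda>c M. gateU d c * M) cs (1\<^sub>m d) \<in> carrier_mat d d"
  by (induction cs) (auto simp: mult_carrier_mat[OF gate_carrier])

lemma foldr_mult: "M \<in> carrier_mat d d \<Longrightarrow>
   foldr (\<lambda>c M. gateU d c * M) cs M = foldr (\<lambda>c M. gateU d c * M) cs (1\<^sub>m d) * M"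
proof (induction cs)
  case Nil thus ?case by simp
next
  case (Cons c cs)
  thus ?case using assoc_mult_mat[OF gate_carrier foldr_carrier Cons.prems] by simp
qed

lemma inG_carrier: "inG d M \<Longrightarrow> M \<in> carrier_mat d d"
  unfolding inG_def using foldr_carrier by auto

lemma inG_one: "inG d (1\<^sub>m d)" unfolding inG_def by (rule exI[of _ "[]"]) simp

lemma inG_gate: "admissible d c \<Longrightarrow> inG d (gateU d c)"
  unfolding inG_def by (rule exI[of _ "[c]"]) (simp add: right_mult_one_mat[OF gate_carrier])

lemma inG_mult: assumes "inG d A" "inG d B" shows "inG d (A * B)"
proof -
  obtain cs1 where 1: "\<forall>c\<in>set cs1. admissible d c" "A = foldr (\<lambda>c M. gateU d c * M) cs1 (1\<^sub>m d)"
    using assms(1) unfolding inG_def by auto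
  obtain cs2 where 2: "\<forall>c\<in>set cs2. admissible d c" "B = foldr (\<lambda>c M. gateU d c * M) cs2 (1\<^sub>m d)"
    using assms(2) unfolding inG_def by auto
  have "foldr (\<lambda>c M. gateU d c * M) (cs1 @ cs2) (1\<^sub>m d) = A * B"
    using foldr_mult[OF foldr_carrier[of d cs2], of cs1] 1 2 by simp
  thus ?thesis unfolding inG_def using 1 2 by (intro exI[of _ "cs1 @ cs2"]) auto
qed

lemma ip_add_right: "ip d v (\<lambda>m. x m + c * w m) = ip d v x + c * ip d v w"
  by (simp add: ip_def ring_distribs sum.distrib sum_distrib_left mult_ac)
lemma ip_add_left: "ip d (\<lambda>m. x m + c * w m) y = ip d x y + cnj c * ip d w y"
  by (simp add: ip_def ring_distribs sum.distrib sum_distrib_left mult_ac)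
lemma ip_swap: "ip d x w = cnj (ip d w x)"
  by (simp add: ip_def mult.commute)
lemma ip_scale: "ip d (\<lambda>m. k * v m) (\<lambda>m. k' * x m) = cnj k * k' * ip d v x"
  by (simp add: ip_def sum_distrib_left mult_ac)

lemma Rv_Rv: assumes "unitv d w" shows "Rv d w a (Rv d w b x) = Rv d w (a*b) x"
proof -
  have "ip d w (Rv d w b x) = ip d w x + ((b - 1) * ip d w x) * ip d w w"
    unfolding Rv_def by (rule ip_add_right)
  hence "ip d w (Rv d w b x) = b * ip d w x" using assms by (simp add: unitv_def algebra_simps)
  thus ?thesis by (simp add: Rv_def algebra_simps)
qed

lemma transfer:
  assumes w: "unitv d w" and x: "unitv d x" and y: "unitv d (\<lambda>m. x m + c * w m)"
  shows "\<exists>a. cmod a = 1 \<and> Rv d w a x = (\<lambda>m. x m + c * w m)"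
proof (cases "c = 0")
  case True thus ?thesis by (intro exI[of _ 1]) (simp add: Rv_def)
next
  case False
  define s where "s = ip d w x"
  have "ip d (\<lambda>m. x m + c * w m) (\<lambda>m. x m + c * w m) = 1" using y by (simp add: unitv_def)
  hence "ip d x x + c * ip d x w + cnj c * (ip d w x + c * ip d w w) = 1"
    by (simp add: ip_add_left ip_add_right)
  hence eq: "c * cnj s + cnj c * s + cnj c * c = 0"
    using w x by (simp add: unitv_def s_def ip_swap[of d x w] algebra_simps)
  have s0: "s \<noteq> 0"
  proof
    assume "s = 0"
    hence "cnj c * c = 0" using eq by simp
    thus False using False by simp
  qed
  define a where "a = 1 + c / s"
  have "a * cnj a = ((s + c) * cnj (s + c)) / (s * cnj s)"
    using s0 by (simp add: a_def field_simps)
  also have "(s + c) * cnj (s + c) = s * cnj s + (c * cnj s + cnj c * s + cnj c * c)"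
    by (simp add: algebra_simps)
  also have "\<dots> = s * cnj s" using eq by simp
  finally have "a * cnj a = 1" using s0 by simp
  hence "cmod a = 1" by (rule cnj_norm1)
  moreover have "Rv d w a x = (\<lambda>m. x m + c * w m)"
    using s0 by (simp add: Rv_def a_def s_def[symmetric] field_simps)
  ultimately show ?thesis by blast
qed

definition Fm :: "nat \<Rightarrow> complex mat" where "Fm d = gateU d (\<lambda>_. 1)"
definition Fadj :: "nat \<Rightarrow> complex mat" where
  "Fadj d = mat d d (\<lambda>(m,n). cnj (omega d ^ (m*n)) / complex_of_real (sqrt (real d)))"
definition Pm :: "nat \<Rightarrow> complex mat" where
  "Pm d = mat d d (\<lambda>(m,k). if d dvd (m + k) then 1 else 0)"

lemma Fm_mat: "Fm d = mat d d (\<lambda>(m,j). omega d ^ (j*m) / complex_of_real (sqrt (real d)))"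
  by (simp add: Fm_def gateU_def)

lemma sqrt_sq: "complex_of_real (sqrt (real d)) * complex_of_real (sqrt (real d)) = of_nat d"
proof -
  have "complex_of_real (sqrt (real d)) * complex_of_real (sqrt (real d)) = complex_of_real (sqrt (real d) * sqrt (real d))"
    by (simp only: of_real_mult)
  also have "sqrt (real d) * sqrt (real d) = real d" by simp
  finally show ?thesis by simp
qed

lemma sum_sqrt_aux:
  "(\<Sum>k<d. a k / complex_of_real (sqrt (real d)) * (b k / complex_of_real (sqrt (real d))))
   = (\<Sum>k<d. b k * a k) / of_nat d"
proof -
  have "\<And>k. a k / complex_of_real (sqrt (real d)) * (b k / complex_of_real (sqrt (real d)))
     = (b k * a k) / (complex_of_real (sqrt (real d)) * complex_of_real (sqrt (real d)))"
    by (simp add: field_simps)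
  hence "(\<Sum>k<d. a k / complex_of_real (sqrt (real d)) * (b k / complex_of_real (sqrt (real d))))
     = (\<Sum>k<d. (b k * a k) / of_nat d)" unfolding sqrt_sq by simp
  also have "\<dots> = (\<Sum>k<d. b k * a k) / of_nat d" by (rule sum_divide_distrib[symmetric])
  finally show ?thesis .
qed

lemma diag_left: "diagm d c * mat d d f = mat d d (\<lambda>(m,n). c m * f (m,n))"
  unfolding diagm_def mat_mult_mat
proof (rule mat_eqI')
  fix i j assume i: "i < d" and j: "j < d"
  have "(\<Sum>k<d. dl i k * c i * f (k,j)) = (\<Sum>k<d. dl i k * (c i * f (k,j)))" by (simp add: mult_ac)
  also have "\<dots> = c i * f (i,j)" using i by (rule sum_dl_left)
  finally show "(case (i, j) of (i, j) \<Rightarrow> \<Sum>k<d. (case (i, k) of (m, n) \<Rightarrow> dl m n * c m) * f (k, j)) =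
         (case (i, j) of (m, n) \<Rightarrow> c m * f (m, n))" by simp
qed

lemma diag_right: "mat d d f * diagm d c = mat d d (\<lambda>(m,n). f (m,n) * c n)"
  unfolding diagm_def mat_mult_mat
proof (rule mat_eqI')
  fix i j assume i: "i < d" and j: "j < d"
  have "(\<Sum>k<d. f (i,k) * (dl k j * c k)) = (\<Sum>k<d. (f (i,k) * c k) * dl k j)" by (simp add: mult_ac)
  also have "\<dots> = f (i,j) * c j" using j by (rule sum_dl_right)
  finally show "(case (i, j) of (i, j) \<Rightarrow> \<Sum>k<d. f (i, k) * (case (k, j) of (m, n) \<Rightarrow> dl m n * c m)) =
         (case (i, j) of (m, n) \<Rightarrow> f (m, n) * c n)" by simp
qed

lemma gate_F_diag: "gateU d c = Fm d * diagm d c"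
  unfolding Fm_mat diag_right gateU_def by (rule mat_eqI') (simp add: mult_ac)

lemma Fadj_F: assumes d: "d > 0" shows "Fadj d * Fm d = 1\<^sub>m d"
proof (rule eq_matI)
  fix i j assume i: "i < dim_row (1\<^sub>m d)" and j: "j < dim_col (1\<^sub>m d)"
  hence i: "i < d" and j: "j < d" by auto
  have "(Fadj d * Fm d) $$ (i,j) = (\<Sum>k<d. cnj (omega d ^ (i*k)) / complex_of_real (sqrt (real d)) *
            (omega d ^ (j*k) / complex_of_real (sqrt (real d))))"
    unfolding Fadj_def Fm_mat mat_mult_mat using i j by simp
  also have "\<dots> = (\<Sum>k<d. omega d ^ (j*k) * cnj (omega d ^ (i*k))) / of_nat d"
    by (rule sum_sqrt_aux)
  also have "\<dots> = (\<Sum>k<d. omega d ^ (k*j) * cnj (omega d ^ (k*i))) / of_nat d"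
    by (simp only: mult.commute[of j] mult.commute[of i])
  also have "\<dots> = 1\<^sub>m d $$ (i,j)" using omega_sum[OF d j i] i j d by auto
  finally show "(Fadj d * Fm d) $$ (i,j) = 1\<^sub>m d $$ (i,j)" .
qed (auto simp: Fadj_def Fm_mat)

lemma F_Fadj: assumes d: "d > 0" shows "Fm d * Fadj d = 1\<^sub>m d"
proof (rule eq_matI)
  fix i j assume i: "i < dim_row (1\<^sub>m d)" and j: "j < dim_col (1\<^sub>m d)"
  hence i: "i < d" and j: "j < d" by auto
  have "(Fm d * Fadj d) $$ (i,j) = (\<Sum>k<d. omega d ^ (k*i) / complex_of_real (sqrt (real d)) *
            (cnj (omega d ^ (k*j)) / complex_of_real (sqrt (real d))))"
    unfolding Fadj_def Fm_mat mat_mult_mat using i j by simp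
  also have "\<dots> = (\<Sum>k<d. cnj (omega d ^ (k*j)) * omega d ^ (k*i)) / of_nat d"
    by (rule sum_sqrt_aux)
  also have "\<dots> = (\<Sum>k<d. omega d ^ (k*i) * cnj (omega d ^ (k*j))) / of_nat d"
    by (intro arg_cong[where f="\<lambda>x. x / of_nat d"] sum.cong refl) (rule mult.commute)
  also have "\<dots> = 1\<^sub>m d $$ (i,j)" using omega_sum[OF d i j] i j d by auto
  finally show "(Fm d * Fadj d) $$ (i,j) = 1\<^sub>m d $$ (i,j)" .
qed (auto simp: Fadj_def Fm_mat)

lemma F_F: assumes d: "d > 0" shows "Fm d * Fm d = Pm d"
proof (rule eq_matI)
  fix i j assume i: "i < dim_row (Pm d)" and j: "j < dim_col (Pm d)"
  hence i: "i < d" and j: "j < d" by (auto simp: Pm_def)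
  define z where "z = cis (2*pi*real_of_int (int i + int j) / real d)"
  have tm: "omega d ^ (j*k) * omega d ^ (k*i) = z ^ k" for k
  proof -
    have "omega d ^ (j*k) * omega d ^ (k*i) = cis (2*pi*real (j*k) / real d) * cis (2*pi*real (k*i) / real d)"
      by (simp only: omega_pow)
    also have "\<dots> = cis (real k * (2*pi*real_of_int (int i + int j) / real d))"
      by (simp add: cis_mult algebra_simps add_divide_distrib)
    also have "\<dots> = z ^ k" by (simp only: DeMoivre z_def)
    finally show ?thesis .
  qed
  have dvdeq: "(int d dvd int i + int j) = (d dvd i + j)"
    by (simp only: of_nat_add[symmetric] int_dvd_int_iff)
  have "(Fm d * Fm d) $$ (i,j) = (\<Sum>k<d. omega d ^ (k*i) / complex_of_real (sqrt (real d)) *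
            (omega d ^ (j*k) / complex_of_real (sqrt (real d))))"
    unfolding Fm_mat mat_mult_mat using i j by simp
  also have "\<dots> = (\<Sum>k<d. omega d ^ (j*k) * omega d ^ (k*i)) / of_nat d"
    by (rule sum_sqrt_aux)
  also have "\<dots> = (\<Sum>k<d. z ^ k) / of_nat d" by (simp only: tm)
  also have "\<dots> = (if int d dvd int i + int j then of_nat d else 0) / of_nat d"
    unfolding z_def by (simp only: cis_root_sum[OF d])
  also have "\<dots> = Pm d $$ (i,j)" using i j d dvdeq by (simp add: Pm_def)
  finally show "(Fm d * Fm d) $$ (i,j) = Pm d $$ (i,j)" .
qed (auto simp: Pm_def Fm_mat)

lemma omega_d: "omega d ^ d = 1" if "d > 0"
  using that by (simp add: omega_pow)

lemma P_F: assumes d: "d > 0" shows "Pm d * Fm d = Fadj d"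
proof (rule eq_matI)
  fix i j assume i: "i < dim_row (Fadj d)" and j: "j < dim_col (Fadj d)"
  hence i: "i < d" and j: "j < d" by (auto simp: Fadj_def)
  define k0 where "k0 = (d - i) mod d"
  have k0: "k0 < d" using d by (simp add: k0_def)
  have dv: "d dvd (i + k0)"
  proof (cases "i = 0")
    case True thus ?thesis by (simp add: k0_def)
  next
    case False thus ?thesis using i by (simp add: k0_def)
  qed
  have uniq: "\<And>k. k < d \<Longrightarrow> d dvd (i + k) \<longleftrightarrow> k = k0"
  proof
    fix k assume k: "k < d" "d dvd (i + k)"
    have "i + k < 2 * d" using i k by simp
    moreover obtain q where q0: "i + k = d * q" using k(2) by (auto elim: dvdE)
    ultimately have "d * q < d * 2" by simp
    hence "q < 2" by simp
    note q = q0 this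
    hence "q = 0 \<or> q = 1" by auto
    thus "k = k0"
    proof
      assume "q = 0" thus ?thesis using q by (simp add: k0_def)
    next
      assume q1: "q = 1"
      hence ik: "i + k = d" using q by simp
      hence "i \<noteq> 0" using k by auto
      thus ?thesis using ik i by (simp add: k0_def)
    qed
  qed (use dv in simp)
  have "(Pm d * Fm d) $$ (i,j) = (\<Sum>k<d. (if d dvd (i + k) then 1 else 0) * (omega d ^ (j*k) / complex_of_real (sqrt (real d))))"
    unfolding Pm_def Fm_mat mat_mult_mat using i j by simp
  also have "\<dots> = (\<Sum>k<d. if k = k0 then omega d ^ (j*k) / complex_of_real (sqrt (real d)) else 0)"
    by (rule sum.cong) (auto simp: uniq)
  also have "\<dots> = omega d ^ (j*k0) / complex_of_real (sqrt (real d))" using k0 by simp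
  also have "omega d ^ (j*k0) = cnj (omega d ^ (i*j))"
  proof -
    obtain q where q: "i + k0 = d * q" using dv by (auto elim: dvdE)
    have e: "j*k0 + i*j = d*(q*j)"
    proof -
      have "j*k0 + i*j = (i+k0)*j" by (simp add: algebra_simps)
      thus ?thesis using q by simp
    qed
    have "omega d ^ (j*k0) * omega d ^ (i*j) = omega d ^ (j*k0 + i*j)"
      by (simp add: power_add)
    also have "\<dots> = (omega d ^ d) ^ (q*j)" unfolding e by (simp add: power_mult)
    also have "\<dots> = 1" using omega_d[OF d] by simp
    finally have "omega d ^ (j*k0) * omega d ^ (i*j) = 1" .
    moreover have "cnj (omega d ^ (i*j)) * omega d ^ (i*j) = 1"
      by (simp add: omega_pow cis_cnj cis_mult)
    moreover have "omega d ^ (i*j) \<noteq> 0" by (simp add: omega_pow)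
    ultimately have "omega d ^ (j*k0) * omega d ^ (i*j) = cnj (omega d ^ (i*j)) * omega d ^ (i*j)" by simp
    moreover have "omega d \<noteq> 0" by (simp add: omega_def)
    ultimately show ?thesis by simp
  qed
  also have "cnj (omega d ^ (i*j)) / complex_of_real (sqrt (real d)) = Fadj d $$ (i,j)"
    using i j by (simp add: Fadj_def)
  finally show "(Pm d * Fm d) $$ (i,j) = Fadj d $$ (i,j)" .
qed (auto simp: Pm_def Fm_mat Fadj_def)

lemma inG_F: "inG d (Fm d)"
  unfolding Fm_def by (rule inG_gate) (simp add: admissible_def)

lemma inG_Fadj: assumes "d > 0" shows "inG d (Fadj d)"
proof -
  have "Fadj d = Fm d * Fm d * Fm d" using F_F[OF assms] P_F[OF assms] by simp
  thus ?thesis using inG_F inG_mult by metis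
qed

lemma inG_diag: assumes d: "d > 0" and c: "admissible d c" shows "inG d (diagm d c)"
proof -
  have car: "Fadj d \<in> carrier_mat d d" "Fm d \<in> carrier_mat d d" "diagm d c \<in> carrier_mat d d"
    by (auto simp: Fadj_def Fm_mat diagm_def)
  have "Fadj d * gateU d c = Fadj d * (Fm d * diagm d c)" by (simp add: gate_F_diag)
  also have "\<dots> = (Fadj d * Fm d) * diagm d c" using car by (simp add: assoc_mult_mat)
  also have "\<dots> = diagm d c" using Fadj_F[OF d] car by simp
  finally have "diagm d c = Fadj d * gateU d c" by simp
  thus ?thesis using inG_mult[OF inG_Fadj[OF d] inG_gate[OF c]] by simp
qed

lemma good_cong: "(\<And>m. m < d \<Longrightarrow> v m = v' m) \<Longrightarrow> good d v = good d v'"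
  unfolding good_def using Rm_cong by metis

lemma good_phase: assumes l: "cmod l = 1" and g: "good d v" shows "good d (\<lambda>m. l * v m)"
proof -
  have ll: "l * cnj l = 1" using l by (rule norm1_cnj)
  have "Rm d (\<lambda>m. l * v m) a = Rm d v a" for a
    unfolding Rm_def by (rule mat_eqI') (simp, metis (no_types, lifting) ll mult.assoc mult.left_commute mult_1)
  thus ?thesis using g unfolding good_def by simp
qed

lemma good_Rv: assumes w: "good d w" and x: "good d x" and wu: "unitv d w" and a: "cmod a = 1"
  shows "good d (Rv d w a x)"
  unfolding good_def
proof (intro allI impI)
  fix b :: complex assume b: "cmod b = 1"
  have "Rm d (Rv d w a x) b = Rm d w a * Rm d x b * Rm d w (cnj a)" using Rm_conj[OF wu a] by simp
  moreover have "inG d (Rm d w a)" "inG d (Rm d x b)" "inG d (Rm d w (cnj a))"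
    using w x a b unfolding good_def by auto
  ultimately show "inG d (Rm d (Rv d w a x) b)" using inG_mult by metis
qed

lemma adm_cnj: "admissible d c \<Longrightarrow> admissible d (\<lambda>m. cnj (c m))"
  by (simp add: admissible_def)

lemma good_diagv: assumes d: "d > 0" and c: "admissible d c" and x: "good d x"
  shows "good d (\<lambda>m. c m * x m)"
  unfolding good_def
proof (intro allI impI)
  fix b :: complex assume b: "cmod b = 1"
  have cm: "\<And>m. m < d \<Longrightarrow> cmod (c m) = 1" using c by (simp add: admissible_def)
  have "Rm d (\<lambda>m. c m * x m) b = diagm d c * Rm d x b * diagm d (\<lambda>m. cnj (c m))"
    using diag_conj[OF cm] by simp
  moreover have "inG d (diagm d c)" "inG d (Rm d x b)" "inG d (diagm d (\<lambda>m. cnj (c m)))"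
    using inG_diag[OF d c] inG_diag[OF d adm_cnj[OF c]] x b unfolding good_def by auto
  ultimately show "inG d (Rm d (\<lambda>m. c m * x m) b)" using inG_mult by metis
qed

lemma good_T:
  assumes x: "good d x" and w: "good d w" and wu: "unitv d w" and xu: "unitv d x" and yu: "unitv d y"
    and l: "cmod l = 1" and y: "y = (\<lambda>m. l * x m + c * w m)"
  shows "good d y"
proof -
  have l0: "l \<noteq> 0" using l by auto
  define y' where "y' = (\<lambda>m. x m + (c / l) * w m)"
  have yy: "y = (\<lambda>m. l * y' m)"
  proof (rule ext)
    fix m show "y m = l * y' m" using l0 by (simp add: y y'_def distrib_left)
  qed
  have "ip d y' y' = 1"
  proof -
    have "y' = (\<lambda>m. inverse l * y m)"
    proof (rule ext)
      fix m show "y' m = inverse l * y m" using l0 by (simp add: y y'_def distrib_left field_simps)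
    qed
    hence "ip d y' y' = cnj (inverse l) * inverse l * ip d y y" by (simp add: ip_scale)
    also have "\<dots> = inverse (l * cnj l)" using yu by (simp add: unitv_def mult.commute)
    also have "\<dots> = 1" using norm1_cnj[OF l] by simp
    finally show ?thesis .
  qed
  hence "unitv d (\<lambda>m. x m + (c / l) * w m)" by (simp add: unitv_def y'_def)
  from transfer[OF wu xu this] obtain a where a: "cmod a = 1" "Rv d w a x = y'" by (auto simp: y'_def)
  have "good d y'" using good_Rv[OF w x wu a(1)] a(2) by simp
  thus ?thesis unfolding yy by (rule good_phase[OF l])
qed

definition f1 :: "nat \<Rightarrow> nat \<Rightarrow> complex" where
  "f1 d m = omega d ^ m / complex_of_real (sqrt (real d))"

lemma good_f1: assumes d: "d > 1" shows "good d (f1 d)"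
  unfolding good_def
proof (intro allI impI)
  fix a :: complex assume a: "cmod a = 1"
  have d0: "d > 0" using d by simp
  define u where "u = (\<lambda>(m,j). omega d ^ (j*m) / complex_of_real (sqrt (real d)))"
  have Fu: "Fm d = mat d d u" by (simp add: Fm_mat u_def)
  have Fa: "Fadj d = mat d d (\<lambda>(k,n). cnj (u (n,k)))"
    unfolding Fadj_def u_def by (rule mat_eqI') (simp add: mult.commute)
  have U: "(\<Sum>k<d. u (m,k) * cnj (u (n,k))) = dl m n" if m: "m < d" and n: "n < d" for m n
  proof -
    have "(Fm d * Fadj d) $$ (m,n) = 1\<^sub>m d $$ (m,n)" using F_Fadj[OF d0] by simp
    thus ?thesis using m n unfolding Fu Fa mat_mult_mat by (simp add: dl_def)
  qed
  define aa where "aa = (\<lambda>k::nat. if k = 1 then a else (1::complex))"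
  have Re1: "Rm d (\<lambda>k. dl k 1) a = diagm d aa"
    unfolding Rm_def diagm_def aa_def by (rule mat_eqI') (auto simp: dl_def)
  have "Fm d * diagm d aa * Fadj d = Rm d (\<lambda>m. \<Sum>k<d. u (m,k) * dl k 1) a"
    unfolding Fu Fa Re1[symmetric] by (rule conj_gen) (rule U)
  also have "\<dots> = Rm d (f1 d) a"
  proof (rule Rm_cong)
    fix m assume m: "m < d"
    have "(\<Sum>k<d. u (m,k) * dl k 1) = u (m,1)" using d by (rule sum_dl_right)
    thus "(\<Sum>k<d. u (m,k) * dl k 1) = f1 d m" by (simp add: u_def f1_def)
  qed
  finally have eq: "Rm d (f1 d) a = Fm d * diagm d aa * Fadj d" by simp
  have "admissible d aa" using a by (simp add: admissible_def aa_def)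
  hence "inG d (diagm d aa)" by (rule inG_diag[OF d0])
  thus "inG d (Rm d (f1 d) a)" unfolding eq using inG_F inG_Fadj[OF d0] inG_mult by metis
qed

lemma omega_norm: "cmod (omega d ^ m) = 1" by (simp add: omega_pow)

lemma good_flat:
  assumes d: "d > 1" and fl: "\<And>m. m < d \<Longrightarrow> cmod (v m) = 1 / sqrt (real d)"
  shows "good d v"
proof -
  have d0: "d > 0" using d by simp
  define s where "s = complex_of_real (sqrt (real d))"
  have s0: "s \<noteq> 0" using d0 by (simp add: s_def)
  have ss: "s * s = of_nat d" unfolding s_def by (rule sqrt_sq)
  have cs: "cnj s = s" by (simp add: s_def)
  define l where "l = cnj (v 0) * s"
  have v0: "cmod (v 0) = 1 / sqrt (real d)" using fl d0 by simp
  have cl: "cmod l = 1" using v0 d0 by (simp add: l_def s_def norm_mult)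
  define e where "e = (\<lambda>m. s * (l * v m) / omega d ^ m)"
  have om0: "\<And>m. omega d ^ m \<noteq> 0" by (simp add: omega_pow)
  have e0: "e 0 = 1"
  proof -
    have "e 0 = s * s * (v 0 * cnj (v 0))" by (simp add: e_def l_def mult_ac)
    also have "v 0 * cnj (v 0) = complex_of_real ((cmod (v 0))^2)" by (rule complex_norm_square[symmetric])
    also have "(cmod (v 0))^2 = 1 / real d" using v0 d0 by (simp add: power_divide)
    finally show ?thesis using ss d0 by simp
  qed
  have em: "cmod (e m) = 1" if m: "m < d" for m
    using fl[OF m] cl d0 by (simp add: e_def s_def norm_mult norm_divide omega_norm)
  have adm: "admissible d e" using e0 em by (simp add: admissible_def)
  have "good d (\<lambda>m. e m * f1 d m)" by (rule good_diagv[OF d0 adm good_f1[OF d]])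
  moreover have "\<And>m. e m * f1 d m = l * v m"
    using s0 om0 by (simp add: e_def f1_def s_def[symmetric])
  ultimately have "good d (\<lambda>m. l * v m)" by simp
  hence "good d (\<lambda>m. cnj l * (l * v m))" by (intro good_phase[of "cnj l"]) (simp_all add: cl)
  moreover have "\<And>m. cnj l * (l * v m) = v m" using norm1_cnj[OF cl]
    by (simp add: mult.assoc[symmetric] mult.commute[of "cnj l"])
  ultimately show ?thesis by simp
qed

definition P :: "nat \<Rightarrow> nat \<Rightarrow> complex \<Rightarrow> complex \<Rightarrow> nat \<Rightarrow> complex" where
  "P d j a b = (\<lambda>m. if m = 0 \<or> m = j then a / complex_of_real (sqrt 2)
                     else b / complex_of_real (sqrt (real d - 2)))"

lemma sum_two:
  assumes d: "3 \<le> d" and j: "0 < j" "j < d"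
  shows "(\<Sum>k<d. (if k = 0 \<or> k = j then p else q)) = 2 * p + (of_nat d - 2) * (q::complex)"
proof -
  have A: "{..<d} \<inter> {k. k = 0 \<or> k = j} = {0, j}" using j d by auto
  have cA: "card {0, j} = 2" using j by simp
  have B: "{..<d} \<inter> - {k. k = 0 \<or> k = j} = {..<d} - {0, j}" by auto
  have cB: "card ({..<d} - {0, j}) = d - 2"
    using j d by (subst card_Diff_subset) auto
  have "(\<Sum>k<d. (if k = 0 \<or> k = j then p else q)) = (\<Sum>k\<in>{0,j}. p) + (\<Sum>k\<in>{..<d} - {0,j}. q)"
    by (simp only: sum.If_cases finite_lessThan A B)
  also have "\<dots> = 2 * p + of_nat (d - 2) * q" using cA cB by simp
  also have "of_nat (d - 2) = (of_nat d - 2 :: complex)" using d by (simp add: of_nat_diff)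
  finally show ?thesis .
qed

lemma sqrt2_sq: "complex_of_real (sqrt 2) * complex_of_real (sqrt 2) = 2"
proof -
  have "complex_of_real (sqrt 2) * complex_of_real (sqrt 2) = complex_of_real (sqrt 2 * sqrt 2)"
    by (simp only: of_real_mult)
  thus ?thesis by simp
qed

lemma sqrtd2_sq: assumes "3 \<le> d"
  shows "complex_of_real (sqrt (real d - 2)) * complex_of_real (sqrt (real d - 2)) = of_nat d - 2"
proof -
  have "complex_of_real (sqrt (real d - 2)) * complex_of_real (sqrt (real d - 2))
     = complex_of_real (sqrt (real d - 2) * sqrt (real d - 2))"
    by (simp only: of_real_mult)
  also have "sqrt (real d - 2) * sqrt (real d - 2) = real d - 2" using assms by simp
  finally show ?thesis by simp
qed

lemma ip_P:
  assumes d: "3 \<le> d" and j: "0 < j" "j < d"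
  shows "ip d (P d j a b) (P d j a' b') = cnj a * a' + cnj b * b'"
proof -
  have nz: "(of_nat d - 2 :: complex) \<noteq> 0"
  proof
    assume "(of_nat d - 2 :: complex) = 0"
    hence "(of_nat d :: complex) = of_nat 2" by simp
    hence "d = 2" by (simp only: of_nat_eq_iff)
    thus False using d by simp
  qed
  have "ip d (P d j a b) (P d j a' b') = (\<Sum>k<d. (if k = 0 \<or> k = j then cnj a * a' / 2 else cnj b * b' / (of_nat d - 2)))"
    unfolding ip_def P_def
  proof (rule sum.cong[OF refl])
    fix k
    show "cnj (if k = 0 \<or> k = j then a / complex_of_real (sqrt 2) else b / complex_of_real (sqrt (real d - 2))) *
          (if k = 0 \<or> k = j then a' / complex_of_real (sqrt 2) else b' / complex_of_real (sqrt (real d - 2))) =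
          (if k = 0 \<or> k = j then cnj a * a' / 2 else cnj b * b' / (of_nat d - 2))"
      using sqrt2_sq sqrtd2_sq[OF d] by (auto simp: field_simps)
  qed
  also have "\<dots> = 2 * (cnj a * a' / 2) + (of_nat d - 2) * (cnj b * b' / (of_nat d - 2))"
    by (rule sum_two[OF d j])
  also have "\<dots> = cnj a * a' + cnj b * b'" using nz by simp
  finally show ?thesis .
qed

lemma lin_P: "(\<lambda>m. l * P d j a b m + k * P d j a' b' m) = P d j (l*a + k*a') (l*b + k*b')"
  by (rule ext) (simp add: P_def add_divide_distrib)

lemma Rv_P: "Rv d (P d j a0 b0) al (P d j a b)
   = P d j (a + ((al - 1) * ip d (P d j a0 b0) (P d j a b)) * a0) (b + ((al - 1) * ip d (P d j a0 b0) (P d j a b)) * b0)"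
proof -
  have "Rv d (P d j a0 b0) al (P d j a b) = (\<lambda>m. 1 * P d j a b m + ((al - 1) * ip d (P d j a0 b0) (P d j a b)) * P d j a0 b0 m)"
    by (simp add: Rv_def mult_ac)
  also have "\<dots> = P d j (1*a + ((al - 1) * ip d (P d j a0 b0) (P d j a b)) * a0) (1*b + ((al - 1) * ip d (P d j a0 b0) (P d j a b)) * b0)"
    by (rule lin_P)
  finally show ?thesis by simp
qed

definition cf :: "nat \<Rightarrow> nat \<Rightarrow> complex" where "cf j m = (if m = 0 \<or> m = j then 1 else -1)"

lemma flip_P: "(\<lambda>m. cf j m * P d j a b m) = P d j a (- b)"
  by (rule ext) (simp add: cf_def P_def)

lemma adm_cf: "admissible d (cf j)" by (simp add: admissible_def cf_def)

lemma good_flip: assumes "d > 0" "good d (P d j a b)" shows "good d (P d j a (- b))"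
  using good_diagv[OF assms(1) adm_cf assms(2)] flip_P by metis

lemma good_Pflat:
  assumes d: "3 \<le> d" and j: "0 < j" "j < d" and z: "cmod z = 1"
  shows "good d (P d j (z * complex_of_real (sqrt (2 / real d))) (complex_of_real (sqrt ((real d - 2) / real d))))"
proof (rule good_flat)
  show "1 < d" using d by simp
  fix m assume m: "m < d"
  have dp: "real d - 2 > 0" using d by simp
  have s1: "sqrt (2 / real d) / sqrt 2 = 1 / sqrt (real d)" by (simp add: real_sqrt_divide)
  have s2: "sqrt ((real d - 2) / real d) / sqrt (real d - 2) = 1 / sqrt (real d)"
    using dp by (simp add: real_sqrt_divide)
  show "cmod (P d j (z * complex_of_real (sqrt (2 / real d))) (complex_of_real (sqrt ((real d - 2) / real d))) m) = 1 / sqrt (real d)"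
  proof (cases "m = 0 \<or> m = j")
    case True
    hence "cmod (P d j (z * complex_of_real (sqrt (2 / real d))) (complex_of_real (sqrt ((real d - 2) / real d))) m)
        = sqrt (2 / real d) / sqrt 2" using z by (simp add: P_def norm_mult norm_divide)
    thus ?thesis using s1 by simp
  next
    case False
    hence "cmod (P d j (z * complex_of_real (sqrt (2 / real d))) (complex_of_real (sqrt ((real d - 2) / real d))) m)
        = sqrt ((real d - 2) / real d) / sqrt (real d - 2)" using dp by (simp add: P_def norm_divide)
    thus ?thesis using s2 by simp
  qed
qed

definition X :: "nat \<Rightarrow> nat \<Rightarrow> real \<Rightarrow> nat \<Rightarrow> complex" where
  "X d j A = P d j (complex_of_real (cos A)) (complex_of_real (sin A))"

lemma unitv_X: assumes d: "3 \<le> d" and j: "0 < j" "j < d" shows "unitv d (X d j A)"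
proof -
  have "ip d (X d j A) (X d j A) = complex_of_real (cos A) * complex_of_real (cos A) + complex_of_real (sin A) * complex_of_real (sin A)"
    unfolding X_def ip_P[OF d j] by simp
  also have "\<dots> = complex_of_real (cos A * cos A + sin A * sin A)" by (simp only: of_real_mult of_real_add)
  also have "\<dots> = 1" by simp
  finally show ?thesis by (simp add: unitv_def)
qed

lemma walk_alg:
  fixes a b c s :: real
  shows "a + (-2 * (- c * a + s * b)) * (- c) - (- (a * (c * c - s * s) - b * (2 * s * c))) = - a * (c * c + s * s - 1)"
    and "- (b + (-2 * (- c * a + s * b)) * s) - (- (b * (c * c - s * s) + a * (2 * s * c))) = b * (c * c + s * s - 1)"
  by (simp_all add: algebra_simps)

lemma walk_real:
  assumes "(cos B)^2 + (sin B)^2 = 1"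
  shows "cos A + (-2 * (- cos B * cos A + sin B * sin A)) * (- cos B) = cos (A - (pi - 2*B))"
    and "- (sin A + (-2 * (- cos B * cos A + sin B * sin A)) * sin B) = sin (A - (pi - 2*B))"
proof -
  have e: "A - (pi - 2*B) = (A + 2*B) - pi" by simp
  have one: "cos B * cos B + sin B * sin B - 1 = 0" using assms by (simp add: power2_eq_square)
  have c1: "cos (A - (pi - 2*B)) = - (cos A * (cos B * cos B - sin B * sin B) - sin A * (2 * sin B * cos B))"
    unfolding e cos_minus_pi cos_add cos_double sin_double by (simp add: power2_eq_square)
  have s1: "sin (A - (pi - 2*B)) = - (sin A * (cos B * cos B - sin B * sin B) + cos A * (2 * sin B * cos B))"
    unfolding e sin_minus_pi sin_add cos_double sin_double by (simp add: power2_eq_square algebra_simps)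
  have "cos A + (-2 * (- cos B * cos A + sin B * sin A)) * (- cos B)
      - (- (cos A * (cos B * cos B - sin B * sin B) - sin A * (2 * sin B * cos B)))
      = - cos A * (cos B * cos B + sin B * sin B - 1)" by (rule walk_alg(1))
  hence "cos A + (-2 * (- cos B * cos A + sin B * sin A)) * (- cos B)
      - (- (cos A * (cos B * cos B - sin B * sin B) - sin A * (2 * sin B * cos B))) = 0"
    unfolding one by simp
  thus "cos A + (-2 * (- cos B * cos A + sin B * sin A)) * (- cos B) = cos (A - (pi - 2*B))"
    unfolding c1 by (simp only: right_minus_eq)
  have "- (sin A + (-2 * (- cos B * cos A + sin B * sin A)) * sin B)
      - (- (sin A * (cos B * cos B - sin B * sin B) + cos A * (2 * sin B * cos B)))
      = sin A * (cos B * cos B + sin B * sin B - 1)" by (rule walk_alg(2))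
  hence "- (sin A + (-2 * (- cos B * cos A + sin B * sin A)) * sin B)
      - (- (sin A * (cos B * cos B - sin B * sin B) + cos A * (2 * sin B * cos B))) = 0"
    unfolding one by simp
  thus "- (sin A + (-2 * (- cos B * cos A + sin B * sin A)) * sin B) = sin (A - (pi - 2*B))"
    unfolding s1 by (simp only: right_minus_eq)
qed

locale plane =
  fixes d j :: nat
  assumes d: "3 \<le> d" and j0: "0 < j" and jd: "j < d"
begin

definition cB where "cB = sqrt (2 / real d)"
definition sB where "sB = sqrt ((real d - 2) / real d)"
definition B where "B = arccos cB"

lemma jj: "0 < j" "j < d" using j0 jd by auto
lemma d0: "d > 0" using d by simp

lemma cB_pos: "0 < cB" and cB_lt1: "cB < 1"
proof -
  show "0 < cB" using d by (simp add: cB_def)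
  have "2 / real d < 1" using d by simp
  thus "cB < 1" by (simp add: cB_def)
qed

lemma sB_pos: "0 < sB" using d by (simp add: sB_def)

lemma cs1: "cB^2 + sB^2 = 1"
proof -
  have "cB^2 + sB^2 = 2 / real d + (real d - 2) / real d" using d by (simp add: cB_def sB_def)
  also have "\<dots> = 1" using d by (simp add: field_simps)
  finally show ?thesis .
qed

lemma cosB: "cos B = cB" using cB_pos cB_lt1 by (simp add: B_def)
lemma sinB: "sin B = sB"
proof -
  have "sin B = sqrt (1 - cB^2)" unfolding B_def using cB_pos cB_lt1 by (simp add: sin_arccos)
  also have "1 - cB^2 = sB^2" using cs1 by simp
  finally show ?thesis using sB_pos by simp
qed

lemma B_pos: "0 < B" and B_lt: "B < pi/2"
proof -
  show "0 < B" using arccos_lt_bounded[of cB] cB_pos cB_lt1 by (simp add: B_def)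
  have "arccos cB < arccos 0" using cB_pos cB_lt1 by (intro arccos_less_arccos) auto
  thus "B < pi/2" by (simp add: B_def)
qed

definition del where "del = pi - 2 * B"
lemma del_pos: "0 < del" using B_lt by (simp add: del_def)

lemma good_w: "cmod z = 1 \<Longrightarrow> good d (P d j (z * complex_of_real cB) (complex_of_real sB))"
  unfolding cB_def sB_def by (rule good_Pflat[OF d jj])

lemma unitv_w: "cmod z = 1 \<Longrightarrow> unitv d (P d j (z * complex_of_real cB) (complex_of_real sB))"
proof -
  assume z: "cmod z = 1"
  have "ip d (P d j (z * complex_of_real cB) (complex_of_real sB)) (P d j (z * complex_of_real cB) (complex_of_real sB))
     = (z * cnj z) * complex_of_real (cB^2) + complex_of_real (sB^2)"
    unfolding ip_P[OF d jj] by (simp add: power2_eq_square mult_ac)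
  also have "\<dots> = complex_of_real (cB^2 + sB^2)" using norm1_cnj[OF z] by simp
  finally show ?thesis using cs1 by (simp add: unitv_def)
qed

lemma good_XB: "good d (X d j B)"
  using good_w[of 1] by (simp add: X_def cosB sinB)

lemma step: assumes g: "good d (X d j A)" shows "good d (X d j (A - del))"
proof -
  define w where "w = P d j ((-1) * complex_of_real cB) (complex_of_real sB)"
  have gw: "good d w" unfolding w_def by (rule good_w) simp
  have uw: "unitv d w" unfolding w_def by (rule unitv_w) simp
  define kr where "kr = -2 * (- cos B * cos A + sin B * sin A)"
  have ipw: "ip d w (X d j A) = complex_of_real (- cos B * cos A + sin B * sin A)"
    unfolding w_def X_def ip_P[OF d jj] by (simp add: cosB sinB)
  have "Rv d w (-1) (X d j A) = P d j (complex_of_real (cos A + kr * (- cos B))) (complex_of_real (sin A + kr * sin B))"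
    unfolding w_def X_def Rv_P using ipw unfolding w_def X_def by (simp add: kr_def cosB sinB)
  moreover have "good d (Rv d w (-1) (X d j A))" by (rule good_Rv[OF gw g uw]) simp
  ultimately have "good d (P d j (complex_of_real (cos A + kr * (- cos B))) (- complex_of_real (sin A + kr * sin B)))"
    using good_flip[OF d0] by metis
  moreover have "cos A + kr * (- cos B) = cos (A - del)" "- (sin A + kr * sin B) = sin (A - del)"
    using walk_real[of B A] cs1 unfolding kr_def del_def cosB sinB by auto
  ultimately show ?thesis unfolding X_def by (metis of_real_minus)
qed

end

context plane begin

lemma walk: "good d (X d j (B - real n * del))"
proof (induction n)
  case 0 thus ?case using good_XB by simp
next
  case (Suc n)
  have "B - real (Suc n) * del = (B - real n * del) - del" by (simp add: algebra_simps)
  thus ?case using step[OF Suc.IH] by metis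
qed

lemma sin_AB: assumes A0: "0 \<le> A" and Ad: "A \<le> del" shows "sin B \<le> sin (A + B)"
proof (cases "A + B \<le> pi/2")
  case True thus ?thesis using B_pos A0 by (intro sin_monotone_2pi_le) auto
next
  case False
  have "sin B \<le> sin (pi - (A + B))"
    using B_pos B_lt False Ad unfolding del_def by (intro sin_monotone_2pi_le) auto
  thus ?thesis by simp
qed

lemma final_step:
  assumes g: "good d (X d j A)" and A0: "0 < A" and Ad: "A < del" and AB: "A \<le> B"
  shows "good d (P d j 1 0)"
proof -
  define c where "c = cos A"
  define s where "s = sin A"
  have Api: "A < pi/2" using AB B_lt by simp
  have c0: "0 < c" unfolding c_def using A0 Api by (intro cos_gt_zero) auto
  have c1: "c \<le> 1" unfolding c_def by simp
  have s0: "0 < s" unfolding s_def using A0 Api by (intro sin_gt_zero) auto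
  have ssB: "s \<le> sB" unfolding s_def sinB[symmetric] using A0 AB B_lt
    by (intro sin_monotone_2pi_le) auto
  define t where "t = s * cB / sB"
  have t0: "0 < t" unfolding t_def using s0 cB_pos sB_pos by simp
  have t1: "t \<le> 1"
  proof -
    have "s * cB \<le> sB * cB" using ssB cB_pos by (intro mult_right_mono) auto
    hence "t \<le> cB" unfolding t_def using sB_pos by (simp add: divide_le_eq mult.commute)
    thus ?thesis using cB_lt1 by simp
  qed
  have ct: "1 \<le> c + t"
  proof -
    have "c + t = (c * sB + s * cB) / sB" unfolding t_def using sB_pos by (simp add: field_simps)
    also have "c * sB + s * cB = sin (A + B)" unfolding c_def s_def sin_add cosB sinB by (simp add: mult.commute)
    finally have "c + t = sin (A + B) / sB" .
    moreover have "sB \<le> sin (A + B)" using sin_AB[of A] A0 Ad sinB by simp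
    ultimately show ?thesis using sB_pos by simp
  qed
  define g where "g = (c^2 + t^2 - 1) / (2*c*t)"
  have ct0: "0 < 2*c*t" using c0 t0 by simp
  have gct: "g * (2*c*t) = c^2 + t^2 - 1" unfolding g_def using c0 t0 by (simp add: field_simps)
  have g1: "g \<le> 1"
  proof -
    have "-1 \<le> c - t" "c - t \<le> 1" using c0 c1 t0 t1 by auto
    hence "(c - t - 1) * (c - t + 1) \<le> 0" by (intro mult_nonpos_nonneg) auto
    hence "c^2 + t^2 - 1 \<le> 1 * (2*c*t)" by (simp add: algebra_simps power2_eq_square)
    thus ?thesis unfolding g_def using ct0 by (simp add: pos_divide_le_eq)
  qed
  have g2: "-1 \<le> g"
  proof -
    have "1 \<le> (c + t)^2" using ct by (simp add: one_le_power)
    hence "(-1) * (2*c*t) \<le> c^2 + t^2 - 1" by (simp add: algebra_simps power2_eq_square)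
    thus ?thesis unfolding g_def using ct0 by (simp add: pos_le_divide_eq)
  qed
  have gg: "g^2 \<le> 1" using g1 g2 by (simp add: abs_square_le_1)
  define r where "r = sqrt (1 - g^2)"
  have r2: "r^2 = 1 - g^2" unfolding r_def using gg by simp
  define z where "z = Complex g r"
  have z1: "cmod z = 1" unfolding z_def using r2 by (simp add: cmod_def)
  define D where "D = complex_of_real c - z * complex_of_real t"
  have DD: "D * cnj D = 1"
  proof -
    have "D * cnj D = complex_of_real ((Re D)^2 + (Im D)^2)" by (rule complex_mult_cnj)
    also have "(Re D)^2 + (Im D)^2 = (c - g*t)^2 + (r*t)^2" by (simp add: D_def z_def power2_eq_square)
    also have "\<dots> = c^2 + t^2 - g * (2*c*t) + (g^2 + r^2 - 1) * t^2" by (simp add: algebra_simps power2_eq_square)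
    also have "\<dots> = 1" using gct r2 by simp
    finally show ?thesis by simp
  qed
  have D0: "D \<noteq> 0" using DD by auto
  define l where "l = inverse D"
  have l1: "cmod l = 1"
  proof -
    have "l * cnj l = inverse (D * cnj D)" by (simp add: l_def)
    thus ?thesis using DD by (intro cnj_norm1) simp
  qed
  define k where "k = - l * complex_of_real (s / sB)"
  have sB0: "sB \<noteq> 0" using sB_pos by simp
  have eq1: "l * complex_of_real c + k * (z * complex_of_real cB) = 1"
  proof -
    have "l * complex_of_real c + k * (z * complex_of_real cB) = l * (complex_of_real c - z * complex_of_real (s * cB / sB))"
      by (simp add: k_def algebra_simps)
    also have "complex_of_real c - z * complex_of_real (s * cB / sB) = D" by (simp add: D_def t_def)
    also have "l * D = 1" using D0 by (simp add: l_def)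
    finally show ?thesis .
  qed
  have eq2: "l * complex_of_real s + k * complex_of_real sB = 0"
    using sB0 by (simp add: k_def field_simps)
  have y: "P d j 1 0 = (\<lambda>m. l * X d j A m + k * P d j (z * complex_of_real cB) (complex_of_real sB) m)"
    unfolding X_def lin_P eq2[unfolded s_def] eq1[unfolded c_def] ..
  have uy: "unitv d (P d j 1 0)" by (simp add: unitv_def ip_P[OF d jj])
  show ?thesis
    by (rule good_T[OF g good_w[OF z1] unitv_w[OF z1] unitv_X[OF d jj] uy l1 y])
qed

lemma good_xi: "good d (P d j 1 0)"
proof -
  define q where "q = B / del"
  have q0: "0 \<le> q" unfolding q_def using B_pos del_pos by simp
  define n where "n = nat (floor q)"
  have rn: "real n = of_int (floor q)" unfolding n_def using q0 by simp
  have n1: "real n \<le> q" using rn by linarith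
  have n2: "q < real n + 1" using rn by linarith
  define A where "A = B - real n * del"
  have gA: "good d (X d j A)" unfolding A_def by (rule walk)
  have A0: "0 \<le> A"
  proof -
    have "real n * del \<le> q * del" using n1 del_pos by (intro mult_right_mono) auto
    also have "q * del = B" unfolding q_def using del_pos by simp
    finally show ?thesis unfolding A_def by simp
  qed
  have Ad: "A < del"
  proof -
    have "B = q * del" unfolding q_def using del_pos by simp
    also have "\<dots> < (real n + 1) * del" using n2 del_pos by (intro mult_strict_right_mono) auto
    finally show ?thesis unfolding A_def by (simp add: algebra_simps)
  qed
  have AB: "A \<le> B" unfolding A_def using del_pos by simp
  show ?thesis
  proof (cases "A = 0")
    case True
    thus ?thesis using gA by (simp add: X_def)
  next
    case False
    thus ?thesis using final_step[OF gA _ Ad AB] A0 by simp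
  qed
qed

end

definition ev :: "nat \<Rightarrow> nat \<Rightarrow> complex" where "ev k = (\<lambda>m. if m = k then 1 else 0)"

lemma sum_supp2:
  fixes j d :: nat
  assumes j: "0 < j" "j < d" and h: "\<And>m. m < d \<Longrightarrow> m \<noteq> 0 \<Longrightarrow> m \<noteq> j \<Longrightarrow> h m = 0"
  shows "(\<Sum>k<d. h k) = h 0 + (h j :: complex)"
proof -
  have sub: "{0,j} \<subseteq> {..<d}" using j by auto
  have z: "\<forall>i\<in>{..<d} - {0,j}. h i = 0" using h by auto
  have "(\<Sum>k<d. h k) = (\<Sum>k\<in>{0,j}. h k)"
    by (rule sum.mono_neutral_right[OF finite_lessThan sub z])
  also have "\<dots> = h 0 + h j" using j by simp
  finally show ?thesis .
qed

lemma cnj_sq: "cnj x * x = complex_of_real ((cmod x)^2)"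
  by (metis complex_norm_square mult.commute)

lemma sq1: assumes "(cmod x)^2 = 1" shows "cmod x = 1"
proof -
  have "cmod x = 1 \<or> cmod x = -1" using assms by (simp add: power2_eq_1_iff)
  thus ?thesis using norm_ge_zero[of x] by linarith
qed

lemma good_ev: assumes "0 < j" "j < d" shows "good d (ev j)"
  unfolding good_def
proof (intro allI impI)
  fix a :: complex assume a: "cmod a = 1"
  have "Rm d (ev j) a = diagm d (\<lambda>m. if m = j then a else 1)"
    unfolding Rm_def diagm_def ev_def by (rule mat_eqI') (auto simp: dl_def)
  moreover have "admissible d (\<lambda>m. if m = j then a else 1)" using a assms by (simp add: admissible_def)
  ultimately show "inG d (Rm d (ev j) a)" using inG_diag assms by simp
qed

lemma unitv_ev: "k < d \<Longrightarrow> unitv d (ev k)"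
  by (simp add: unitv_def ip_def ev_def if_distrib cong: if_cong)

lemma good_span:
  assumes d: "3 \<le> d" and j: "0 < j" "j < d" and st: "(cmod s)^2 + (cmod t)^2 = 1"
  shows "good d (\<lambda>m. s * ev 0 m + t * ev j m)"
proof -
  interpret plane d j using d j by unfold_locales auto
  have d0: "d > 0" using d by simp
  show ?thesis
  proof (cases "s = 0")
    case True
    hence t1: "cmod t = 1" using st by (intro sq1) simp
    have "good d (\<lambda>m. t * ev j m)" by (rule good_phase[OF t1 good_ev[OF j]])
    thus ?thesis using True by simp
  next
    case False
    have s0: "cmod s > 0" using False by simp
    define lam where "lam = (if t = 0 then 1 else (t / complex_of_real (cmod t)) *
                     Complex (cmod t) (sqrt (1 - (cmod t)^2)))"
    have t1: "(cmod t)^2 \<le> 1" using st by (metis le_add_same_cancel2 zero_le_power2)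
    have lam1: "cmod lam = 1"
    proof (cases "t = 0")
      case True thus ?thesis by (simp add: lam_def)
    next
      case False
      have "cmod (Complex (cmod t) (sqrt (1 - (cmod t)^2))) = 1" using t1 by (simp add: cmod_def)
      thus ?thesis using False by (simp add: lam_def norm_mult norm_divide)
    qed
    define mu where "mu = t - lam"
    have mus: "cmod mu = cmod s"
    proof (cases "t = 0")
      case True
      hence "cmod s = 1" using st by (intro sq1) simp
      thus ?thesis using True by (simp add: mu_def lam_def)
    next
      case False
      define u where "u = t / complex_of_real (cmod t)"
      have u1: "cmod u = 1" using False by (simp add: u_def norm_divide)
      have "mu = u * (complex_of_real (cmod t) - Complex (cmod t) (sqrt (1 - (cmod t)^2)))"
        using False by (simp add: mu_def lam_def u_def field_simps)
      also have "complex_of_real (cmod t) - Complex (cmod t) (sqrt (1 - (cmod t)^2)) = Complex 0 (- sqrt (1 - (cmod t)^2))"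
        by (simp add: complex_eq_iff)
      moreover have "cmod (Complex 0 (- sqrt (1 - (cmod t)^2))) = sqrt (1 - (cmod t)^2)"
      proof -
        have q0: "0 \<le> sqrt (1 - (cmod t)^2)" using t1 by simp
        have "cmod (Complex 0 (- sqrt (1 - (cmod t)^2))) = sqrt ((sqrt (1 - (cmod t)^2))^2)"
          by (simp only: cmod_def complex.sel) simp
        also have "\<dots> = sqrt (1 - (cmod t)^2)" using q0 by simp
        finally show ?thesis .
      qed
      ultimately have "cmod mu = sqrt (1 - (cmod t)^2)" using u1 by (simp add: norm_mult)
      moreover have "1 - (cmod t)^2 = (cmod s)^2" using st by simp
      ultimately show ?thesis by simp
    qed
    have mu0: "mu \<noteq> 0" using mus s0 by auto
    define cc where "cc = (\<lambda>m. if m = j then mu / s else 1)"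
    have adm: "admissible d cc" using mus False j by (simp add: admissible_def cc_def norm_divide)
    define rho where "rho = s / complex_of_real (cmod s)"
    have rho1: "cmod rho = 1" using False by (simp add: rho_def norm_divide)
    define w where "w = (\<lambda>m. rho * (cc m * P d j 1 0 m))"
    have gw: "good d w" unfolding w_def by (rule good_phase[OF rho1 good_diagv[OF d0 adm good_xi]])
    have wform: "w = (\<lambda>m. (s / (complex_of_real (cmod s) * complex_of_real (sqrt 2))) * ev 0 m
                         + (mu / (complex_of_real (cmod s) * complex_of_real (sqrt 2))) * ev j m)"
      using j False by (auto simp: w_def cc_def P_def ev_def rho_def intro!: ext)
    have ip_w: "ip d w w = (cnj s * s + cnj mu * mu) / (complex_of_real (cmod s) * complex_of_real (cmod s) * 2)"
    proof -
      have "ip d w w = cnj (w 0) * w 0 + cnj (w j) * w j"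
        unfolding ip_def using j by (intro sum_supp2) (auto simp: wform ev_def)
      also have "\<dots> = (cnj s * s + cnj mu * mu) / (complex_of_real (cmod s) * complex_of_real (cmod s) *
          (complex_of_real (sqrt 2) * complex_of_real (sqrt 2)))"
        using j by (simp add: wform ev_def add_divide_distrib mult_ac)
      also have "complex_of_real (sqrt 2) * complex_of_real (sqrt 2) = 2" by (rule sqrt2_sq)
      finally show ?thesis .
    qed
    have uw: "unitv d w"
    proof -
      have "cnj s * s + cnj mu * mu = complex_of_real (2 * (cmod s)^2)"
        unfolding cnj_sq mus by simp
      hence "ip d w w = complex_of_real (2 * (cmod s)^2) / complex_of_real (2 * (cmod s)^2)"
        unfolding ip_w by (simp add: power2_eq_square mult_ac)
      thus ?thesis using s0 by (simp add: unitv_def)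
    qed
    have uy: "unitv d (\<lambda>m. s * ev 0 m + t * ev j m)"
    proof -
      have "ip d (\<lambda>m. s * ev 0 m + t * ev j m) (\<lambda>m. s * ev 0 m + t * ev j m) = cnj s * s + cnj t * t"
        unfolding ip_def using j by (subst sum_supp2) (auto simp: ev_def)
      also have "\<dots> = complex_of_real ((cmod s)^2 + (cmod t)^2)" unfolding cnj_sq by simp
      finally show ?thesis using st by (simp add: unitv_def)
    qed
    have y: "(\<lambda>m. s * ev 0 m + t * ev j m) = (\<lambda>m. lam * ev j m + (complex_of_real (cmod s) * complex_of_real (sqrt 2)) * w m)"
      using j s0 by (auto simp: wform ev_def mu_def intro!: ext)
    show ?thesis
      by (rule good_T[OF good_ev[OF j] gw uw unitv_ev[OF j(2)] uy lam1 y])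
  qed
qed

lemma unitv_span:
  assumes j: "0 < j" "j < d" and st: "(cmod s)^2 + (cmod t)^2 = 1"
  shows "unitv d (\<lambda>m. s * ev 0 m + t * ev j m)"
proof -
  have "ip d (\<lambda>m. s * ev 0 m + t * ev j m) (\<lambda>m. s * ev 0 m + t * ev j m) = cnj s * s + cnj t * t"
    unfolding ip_def using j by (subst sum_supp2) (auto simp: ev_def)
  also have "\<dots> = complex_of_real ((cmod s)^2 + (cmod t)^2)" unfolding cnj_sq by simp
  finally show ?thesis using st by (simp add: unitv_def)
qed

lemma ip_self_real: "ip d v v = complex_of_real (\<Sum>k<d. (cmod (v k))^2)"
  unfolding ip_def cnj_sq by simp

lemma supp_good:
  assumes d: "3 \<le> d"
  shows "k < d \<Longrightarrow> unitv d b \<Longrightarrow> (\<forall>m. k < m \<longrightarrow> b m = 0) \<Longrightarrow> good d b"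
proof (induction k arbitrary: b)
  case 0
  have j: "0 < (1::nat)" "1 < d" using d by auto
  have bb: "b = (\<lambda>m. b 0 * ev 0 m + 0 * ev 1 m)"
    using 0 by (auto simp: ev_def intro!: ext)
  have "ip d b b = complex_of_real ((cmod (b 0))^2)"
  proof -
    have "ip d b b = cnj (b 0) * b 0 + cnj (b 1) * b 1"
      unfolding ip_def using j 0 by (intro sum_supp2) auto
    thus ?thesis using 0 by (simp add: cnj_sq)
  qed
  hence "complex_of_real ((cmod (b 0))^2) = 1" using 0(2) unfolding unitv_def by metis
  hence "(cmod (b 0))^2 = 1" by (metis of_real_eq_1_iff)
  hence "(cmod (b 0))^2 + (cmod 0)^2 = 1" by simp
  from good_span[OF d j this] bb show ?case by simp
next
  case (Suc k)
  define j where "j = Suc k"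
  have j: "0 < j" "j < d" using Suc.prems by (auto simp: j_def)
  have supp: "\<And>m. j < m \<Longrightarrow> b m = 0" using Suc.prems by (auto simp: j_def)
  define r where "r = sqrt ((cmod (b 0))^2 + (cmod (b j))^2)"
  show ?case
  proof (cases "r = 0")
    case True
    hence "(cmod (b 0))^2 + (cmod (b j))^2 = 0" unfolding r_def by simp
    hence "b 0 = 0" "b j = 0" by (simp_all add: add_nonneg_eq_0_iff)
    hence bz: "b 0 = 0" "b j = 0" by auto
    have "\<forall>m. k < m \<longrightarrow> b m = 0"
    proof (intro allI impI)
      fix m assume km: "k < m"
      show "b m = 0"
      proof (cases "m = j")
        case True thus ?thesis using bz by simp
      next
        case False thus ?thesis using km supp by (simp add: j_def)
      qed
    qed
    thus ?thesis using Suc.IH Suc.prems by simp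
  next
    case False
    have "0 \<le> r" unfolding r_def by simp
    hence r0: "0 < r" using False by linarith
    define bt where "bt = (\<lambda>m. if m = 0 then complex_of_real r else if m = j then 0 else b m)"
    have bt_supp: "\<forall>m. k < m \<longrightarrow> bt m = 0" using supp by (auto simp: bt_def j_def)
    have "ip d bt bt = ip d b b"
    proof -
      have "ip d bt bt - ip d b b = (\<Sum>l<d. cnj (bt l) * bt l - cnj (b l) * b l)"
        unfolding ip_def by (simp add: sum_subtractf)
      also have "\<dots> = (cnj (bt 0) * bt 0 - cnj (b 0) * b 0) + (cnj (bt j) * bt j - cnj (b j) * b j)"
        using j by (intro sum_supp2) (auto simp: bt_def)
      also have "\<dots> = complex_of_real (r^2 - ((cmod (b 0))^2 + (cmod (b j))^2))"
        using j by (simp add: bt_def cnj_sq power2_eq_square)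
      also have "\<dots> = 0" unfolding r_def by simp
      finally show ?thesis by simp
    qed
    hence ubt: "unitv d bt" using Suc.prems by (simp add: unitv_def)
    have gbt: "good d bt" using Suc.IH[OF _ ubt bt_supp] Suc.prems by simp
    define rho where "rho = sqrt ((cmod (b 0 - complex_of_real r))^2 + (cmod (b j))^2)"
    show ?thesis
    proof (cases "rho = 0")
      case True
      hence "(cmod (b 0 - complex_of_real r))^2 + (cmod (b j))^2 = 0" unfolding rho_def by simp
      hence "b 0 - complex_of_real r = 0" "b j = 0" by (simp_all add: add_nonneg_eq_0_iff)
      hence "b = bt" by (auto simp: bt_def intro!: ext)
      thus ?thesis using gbt by simp
    next
      case False
      have "0 \<le> rho" unfolding rho_def by simp
      hence rho0: "0 < rho" using False by linarith
      define s where "s = (b 0 - complex_of_real r) / complex_of_real rho"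
      define t where "t = b j / complex_of_real rho"
      have st: "(cmod s)^2 + (cmod t)^2 = 1"
      proof -
        have "(cmod s)^2 + (cmod t)^2 = ((cmod (b 0 - complex_of_real r))^2 + (cmod (b j))^2) / rho^2"
          using rho0 by (simp add: s_def t_def norm_divide power_divide add_divide_distrib)
        also have "(cmod (b 0 - complex_of_real r))^2 + (cmod (b j))^2 = rho^2" unfolding rho_def by simp
        also have "rho^2 / rho^2 = 1" using rho0 by simp
        finally show ?thesis .
      qed
      define w where "w = (\<lambda>m. s * ev 0 m + t * ev j m)"
      have gw: "good d w" unfolding w_def by (rule good_span[OF d j st])
      have uw: "unitv d w" unfolding w_def by (rule unitv_span[OF j st])
      have beq: "b = (\<lambda>m. 1 * bt m + complex_of_real rho * w m)"
        using rho0 j by (auto simp: bt_def w_def s_def t_def ev_def intro!: ext)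
      show ?thesis by (rule good_T[OF gbt gw uw ubt Suc.prems(2) _ beq]) simp
    qed
  qed
qed

definition colfix :: "nat \<Rightarrow> complex mat \<Rightarrow> nat \<Rightarrow> bool" where
  "colfix d M k \<longleftrightarrow> (\<forall>i m. k \<le> i \<longrightarrow> i < d \<longrightarrow> m < d \<longrightarrow> M $$ (m,i) = dl m i)"
definition uni :: "nat \<Rightarrow> complex mat \<Rightarrow> bool" where
  "uni d M \<longleftrightarrow> (\<forall>m n. m < d \<longrightarrow> n < d \<longrightarrow> (\<Sum>l<d. cnj (M $$ (l,m)) * M $$ (l,n)) = dl m n)"

lemma mult_idx:
  assumes "A \<in> carrier_mat d d" "B \<in> carrier_mat d d" "m < d" "n < d"
  shows "(A * B) $$ (m,n) = (\<Sum>l<d. A $$ (m,l) * B $$ (l,n))"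
  using assms by (simp add: scalar_prod_def lessThan_atLeast0)

lemma uni_mult:
  assumes R: "R \<in> carrier_mat d d" and M: "M \<in> carrier_mat d d" and uR: "uni d R" and uM: "uni d M"
  shows "uni d (R * M)"
  unfolding uni_def
proof (intro allI impI)
  fix m n assume m: "m < d" and n: "n < d"
  have "(\<Sum>l<d. cnj ((R * M) $$ (l,m)) * (R * M) $$ (l,n))
      = (\<Sum>l<d. cnj (\<Sum>p<d. R $$ (l,p) * M $$ (p,m)) * (\<Sum>q<d. R $$ (l,q) * M $$ (q,n)))"
    using m n R M by (intro sum.cong) (simp_all add: mult_idx del: index_mult_mat)
  also have "\<dots> = (\<Sum>l<d. \<Sum>q<d. \<Sum>p<d. (cnj (M $$ (p,m)) * M $$ (q,n)) * (cnj (R $$ (l,p)) * R $$ (l,q)))"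
    by (simp add: sum_product mult_ac)
  also have "\<dots> = (\<Sum>q<d. \<Sum>l<d. \<Sum>p<d. (cnj (M $$ (p,m)) * M $$ (q,n)) * (cnj (R $$ (l,p)) * R $$ (l,q)))"
    by (rule sum.swap)
  also have "\<dots> = (\<Sum>q<d. \<Sum>p<d. \<Sum>l<d. (cnj (M $$ (p,m)) * M $$ (q,n)) * (cnj (R $$ (l,p)) * R $$ (l,q)))"
    by (rule sum.cong[OF refl], rule sum.swap)
  also have "\<dots> = (\<Sum>q<d. \<Sum>p<d. (cnj (M $$ (p,m)) * M $$ (q,n)) * dl p q)"
  proof (intro sum.cong refl)
    fix p q assume q: "q \<in> {..<d}" and p: "p \<in> {..<d}"
    have "(\<Sum>l<d. (cnj (M $$ (p,m)) * M $$ (q,n)) * (cnj (R $$ (l,p)) * R $$ (l,q)))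
       = (cnj (M $$ (p,m)) * M $$ (q,n)) * (\<Sum>l<d. cnj (R $$ (l,p)) * R $$ (l,q))"
      by (simp add: sum_distrib_left)
    also have "(\<Sum>l<d. cnj (R $$ (l,p)) * R $$ (l,q)) = dl p q" using uR p q by (simp add: uni_def)
    finally show "(\<Sum>l<d. (cnj (M $$ (p,m)) * M $$ (q,n)) * (cnj (R $$ (l,p)) * R $$ (l,q)))
       = (cnj (M $$ (p,m)) * M $$ (q,n)) * dl p q" .
  qed
  also have "\<dots> = (\<Sum>q<d. cnj (M $$ (q,m)) * M $$ (q,n))"
    by (intro sum.cong refl) (simp add: sum_dl_right)
  also have "\<dots> = dl m n" using uM m n by (simp add: uni_def)
  finally show "(\<Sum>l<d. cnj ((R * M) $$ (l,m)) * (R * M) $$ (l,n)) = dl m n" .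
qed

lemma uni_Rm: assumes w: "unitv d w" and a: "cmod a = 1" shows "uni d (Rm d w a)"
  unfolding uni_def
proof (intro allI impI)
  fix m n assume m: "m < d" and n: "n < d"
  have "Rm d w (cnj a) * Rm d w a = 1\<^sub>m d" using Rm_mult[OF w] norm1_cnj[OF a] Rm_one
    by (simp add: mult.commute)
  hence "(Rm d w (cnj a) * Rm d w a) $$ (m,n) = dl m n" using m n by (simp add: dl_def)
  moreover have "(Rm d w (cnj a) * Rm d w a) $$ (m,n) = (\<Sum>l<d. Rm d w (cnj a) $$ (m,l) * Rm d w a $$ (l,n))"
    by (rule mult_idx[OF Rm_carrier Rm_carrier m n])
  ultimately have "(\<Sum>l<d. Rm d w (cnj a) $$ (m,l) * Rm d w a $$ (l,n)) = dl m n" by simp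
  moreover have "\<And>l. l < d \<Longrightarrow> Rm d w (cnj a) $$ (m,l) = cnj (Rm d w a $$ (l,m))"
    using m by (simp add: Rm_def dl_sym mult_ac)
  ultimately show "(\<Sum>l<d. cnj (Rm d w a $$ (l,m)) * Rm d w a $$ (l,n)) = dl m n"
    by (metis (no_types, lifting) lessThan_iff sum.cong)
qed

lemma Rv_one: "Rv d w 1 x = x" by (simp add: Rv_def)

lemma factor:
  assumes d: "3 \<le> d"
  shows "k \<le> d \<Longrightarrow> M \<in> carrier_mat d d \<Longrightarrow> uni d M \<Longrightarrow> colfix d M k \<Longrightarrow> inG d M"
proof (induction k arbitrary: M)
  case 0
  have "M = 1\<^sub>m d"
    using 0 by (intro eq_matI) (auto simp: colfix_def dl_def)
  thus ?case using inG_one by simp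
next
  case (Suc k)
  have kd: "k < d" using Suc.prems by simp
  have Mc: "M \<in> carrier_mat d d" using Suc.prems by simp
  have uM: "uni d M" using Suc.prems by simp
  have cf: "\<And>i m. Suc k \<le> i \<Longrightarrow> i < d \<Longrightarrow> m < d \<Longrightarrow> M $$ (m,i) = dl m i"
    using Suc.prems by (simp add: colfix_def)
  define b where "b = (\<lambda>m. if m < d then M $$ (m,k) else 0)"
  have ub: "unitv d b"
  proof -
    have "ip d b b = (\<Sum>l<d. cnj (M $$ (l,k)) * M $$ (l,k))" unfolding ip_def b_def by (intro sum.cong) auto
    also have "\<dots> = 1" using uM kd by (simp add: uni_def dl_def)
    finally show ?thesis by (simp add: unitv_def)
  qed
  have supp: "\<forall>m. k < m \<longrightarrow> b m = 0"
  proof (intro allI impI)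
    fix m assume km: "k < m"
    show "b m = 0"
    proof (cases "m < d")
      case True
      have "(\<Sum>l<d. cnj (M $$ (l,m)) * M $$ (l,k)) = dl m k" using uM True kd by (simp add: uni_def)
      moreover have "(\<Sum>l<d. cnj (M $$ (l,m)) * M $$ (l,k)) = (\<Sum>l<d. dl m l * M $$ (l,k))"
        using cf km True by (intro sum.cong) (auto simp: dl_sym)
      moreover have "(\<Sum>l<d. dl m l * M $$ (l,k)) = M $$ (m,k)" using True by (rule sum_dl_left)
      ultimately show ?thesis using km True by (simp add: b_def dl_def)
    qed (simp add: b_def)
  qed
  have gb: "good d b" by (rule supp_good[OF d kd ub supp])
  show ?case
  proof (cases "\<forall>m. b m = ev k m")
    case True
    have "colfix d M k" unfolding colfix_def
    proof (intro allI impI)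
      fix i m assume "k \<le> i" "i < d" "m < d"
      thus "M $$ (m,i) = dl m i"
      proof (cases "i = k")
        case True thus ?thesis using \<open>\<forall>m. b m = ev k m\<close> \<open>m < d\<close>
          by (metis b_def dl_def ev_def)
      next
        case False thus ?thesis using cf \<open>k \<le> i\<close> \<open>i < d\<close> \<open>m < d\<close> by simp
      qed
    qed
    thus ?thesis using Suc.IH Suc.prems by simp
  next
    case False
    then obtain m0 where m0: "b m0 \<noteq> ev k m0" by blast
    have m0d: "m0 < d" using m0 kd by (cases "m0 < d") (auto simp: b_def ev_def)
    define v where "v = (\<lambda>m. b m - ev k m)"
    define rho where "rho = sqrt (\<Sum>l<d. (cmod (v l))^2)"
    have spos: "0 < (\<Sum>l<d. (cmod (v l))^2)"
      using m0 m0d by (intro sum_pos2[of "{..<d}" m0]) (auto simp: v_def)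
    have rho0: "0 < rho" unfolding rho_def using spos by simp
    have rho2: "rho^2 = (\<Sum>l<d. (cmod (v l))^2)" unfolding rho_def using spos by simp
    define w where "w = (\<lambda>m. inverse (complex_of_real rho) * v m)"
    have uw: "unitv d w"
    proof -
      have "ip d w w = cnj (inverse (complex_of_real rho)) * inverse (complex_of_real rho) * ip d v v"
        unfolding w_def by (rule ip_scale)
      also have "ip d v v = complex_of_real (rho^2)" unfolding ip_self_real rho2 ..
      also have "cnj (inverse (complex_of_real rho)) * inverse (complex_of_real rho) * complex_of_real (rho^2) = 1"
      proof -
        have nz: "complex_of_real rho \<noteq> 0" using rho0 by simp
        have "cnj (inverse (complex_of_real rho)) = inverse (complex_of_real rho)" by simp
        moreover have "inverse (complex_of_real rho) * inverse (complex_of_real rho) * (complex_of_real rho * complex_of_real rho) = 1"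
          using nz by (simp add: field_simps)
        ultimately show ?thesis by (simp add: power2_eq_square)
      qed
      finally show ?thesis by (simp add: unitv_def)
    qed
    have wsupp: "\<forall>m. k < m \<longrightarrow> w m = 0" using supp by (simp add: w_def v_def ev_def)
    have gw: "good d w" by (rule supp_good[OF d kd uw wsupp])
    have beq: "b = (\<lambda>m. ev k m + complex_of_real rho * w m)"
    proof (rule ext)
      fix m
      have nz: "complex_of_real rho \<noteq> 0" using rho0 by simp
      have h: "complex_of_real rho * (inverse (complex_of_real rho) * (b m - ev k m)) = b m - ev k m"
        using nz by (simp add: mult.assoc[symmetric] right_inverse)
      show "b m = ev k m + complex_of_real rho * w m" unfolding w_def v_def h by simp
    qed
    obtain a where a: "cmod a = 1" "Rv d w a (ev k) = b"
      using transfer[OF uw unitv_ev[OF kd]] ub beq by metis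
    define M' where "M' = Rm d w (cnj a) * M"
    have M'c: "M' \<in> carrier_mat d d" unfolding M'_def by (rule mult_carrier_mat[OF Rm_carrier Mc])
    have uM': "uni d M'" unfolding M'_def
      by (rule uni_mult[OF Rm_carrier Mc uni_Rm[OF uw] uM]) (simp add: a)
    have cf': "colfix d M' k" unfolding colfix_def
    proof (intro allI impI)
      fix i m assume ki: "k \<le> i" and id: "i < d" and md: "m < d"
      have "M' $$ (m,i) = (\<Sum>l<d. (dl m l + (cnj a - 1) * w m * cnj (w l)) * M $$ (l,i))"
        unfolding M'_def mult_idx[OF Rm_carrier Mc md id] using md by (intro sum.cong) (auto simp: Rm_def)
      also have "\<dots> = dl m i"
      proof (cases "i = k")
        case True
        have "(\<Sum>l<d. (dl m l + (cnj a - 1) * w m * cnj (w l)) * M $$ (l,i))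
            = (\<Sum>l<d. (dl m l + (cnj a - 1) * w m * cnj (w l)) * b l)"
          using True by (intro sum.cong) (auto simp: b_def)
        also have "\<dots> = Rv d w (cnj a) b m" using md by (rule Rm_apply)
        also have "Rv d w (cnj a) b = ev k"
          using a Rv_Rv[OF uw, of "cnj a" a "ev k"] norm1_cnj[OF a(1)] by (simp add: mult.commute Rv_one)
        finally show ?thesis using True by (simp add: ev_def dl_def)
      next
        case False
        hence ki': "Suc k \<le> i" using ki by simp
        have "(\<Sum>l<d. (dl m l + (cnj a - 1) * w m * cnj (w l)) * M $$ (l,i))
            = (\<Sum>l<d. (dl m l + (cnj a - 1) * w m * cnj (w l)) * dl l i)"
          using cf[OF ki' id] by (intro sum.cong) auto
        also have "\<dots> = dl m i + (cnj a - 1) * w m * cnj (w i)" using id by (rule sum_dl_right)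
        also have "w i = 0" using wsupp ki' by simp
        finally show ?thesis by simp
      qed
      finally show "M' $$ (m,i) = dl m i" .
    qed
    have gM': "inG d M'" using Suc.IH[OF _ M'c uM' cf'] kd by simp
    have "Rm d w a * M' = (Rm d w a * Rm d w (cnj a)) * M"
      unfolding M'_def by (rule assoc_mult_mat[OF Rm_carrier Rm_carrier Mc, symmetric])
    also have "Rm d w a * Rm d w (cnj a) = 1\<^sub>m d" using Rm_mult[OF uw] norm1_cnj[OF a(1)] Rm_one by simp
    finally have "M = Rm d w a * M'" using Mc by simp
    moreover have "inG d (Rm d w a)" using gw a unfolding good_def by simp
    ultimately show ?thesis using inG_mult gM' by simp
  qed
qed

lemma adj_idx: assumes "V \<in> carrier_mat d d" "i < d" "j < d"
  shows "mat_adjoint V $$ (i,j) = cnj (V $$ (j,i))"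
  using assms unfolding mat_adjoint_def by (simp add: mat_of_rows_def)
lemma adj_dim: assumes "V \<in> carrier_mat d d" shows "mat_adjoint V \<in> carrier_mat d d"
  using assms unfolding mat_adjoint_def by (simp add: mat_of_rows_def)

theorem theorem3:
  fixes d :: nat and V :: "complex mat"
  assumes "prime d" and "odd d" and "unitary_mat d V"
  shows "\<exists>cs :: (nat \<Rightarrow> complex) list.
           (\<forall>c \<in> set cs. admissible d c) \<and>
           V = foldr (\<lambda>c M. gateU d c * M) cs (1\<^sub>m d)"
proof -
  have d2: "2 \<le> d" using assms(1) by (simp add: prime_ge_2_nat)
  have "d \<noteq> 2" using assms(2) by auto
  hence d: "3 \<le> d" using d2 by simp
  have Vc: "V \<in> carrier_mat d d" and VV: "V * mat_adjoint V = 1\<^sub>m d"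
    using assms(3) by (auto simp: unitary_mat_def)
  have VV': "mat_adjoint V * V = 1\<^sub>m d" by (rule mat_mult_left_right_inverse[OF Vc adj_dim[OF Vc] VV])
  have uV: "uni d V" unfolding uni_def
  proof (intro allI impI)
    fix m n assume m: "m < d" and n: "n < d"
    have "(mat_adjoint V * V) $$ (m,n) = (\<Sum>l<d. mat_adjoint V $$ (m,l) * V $$ (l,n))"
      using m n Vc adj_dim[OF Vc] by (simp add: mult_idx del: index_mult_mat)
    also have "\<dots> = (\<Sum>l<d. cnj (V $$ (l,m)) * V $$ (l,n))"
      using m Vc by (intro sum.cong) (auto simp: adj_idx)
    finally show "(\<Sum>l<d. cnj (V $$ (l,m)) * V $$ (l,n)) = dl m n" using VV' m n by (simp add: dl_def)
  qed
  have "colfix d V d" by (simp add: colfix_def)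
  hence "inG d V" by (rule factor[OF d order.refl Vc uV])
  thus ?thesis unfolding inG_def by auto
qed

end
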